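(* Let $p\ge 2$ be an integer, $x\in\operatorname{dom} h$, $\beta>1$ and $H=\beta L_p$. Let $T$ be a minimizer of $$y\mapsto \Omega_p(f,x;y)+\frac{H}{(p+1)!}\|y-x\|^{p+1}+h(y)$$ over $y\in\mathbb{E}$, and let $$F'(T)=\nabla f(T)-\nabla\Omega_p(f,x;T)-\frac{H}{p!}\|T-x\|^{p-1}B(T-x)\in\mathbb{E}^*.$$ Then $$\langle F'(T),x-T\rangle\;\ge\;\Big(\frac{p!}{(p+1)L_p}\Big)^{1/p}\,\|F'(T)\|_*^{\frac{p+1}{p}}\cdot\frac{(\beta^2-1)^{\frac{p-1}{2p}}}{\beta}\cdot\frac{p}{(p^2-1)^{\frac{p-1}{2p}}}.$$ In particular, if $\beta=p$, then $\langle F'(T),x-T\rangle\ge \big(\frac{p!}{(p+1)L_p}\big)^{1/p}\|F'(T)\|_*^{(p+1)/p}$.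
   Context: $\mathbb{E}$ is a finite-dimensional real vector space with dual $\mathbb{E}^*$ and pairing $\langle s,x\rangle$. Fix a self-adjoint positive-definite linear operator $B:\mathbb{E}\to\mathbb{E}^*$ and set $\|x\|=\langle Bx,x\rangle^{1/2}$ for $x\in\mathbb{E}$, $\|g\|_*=\langle g,B^{-1}g\rangle^{1/2}$ for $g\in\mathbb{E}^*$. For a $p$ times differentiable function $f$, $D^kf(x)[h]^k$ is the $k$-th directional derivative along $h$, and for symmetric $p$-linear forms $\|A\|=\max_{\|h\|\le 1}|A[h]^p|$. Let $h:\mathbb{E}\to\mathbb{R}\cup\{+\infty\}$ be a proper closed convex function and $f$ a convex function, $p$ times differentiable on an open convex set containing $\operatorname{dom} h$, with $\|D^pf(x)-D^pf(y)\|\le L_p\|x-y\|$ for all $x,y\in\operatorname{dom}h$, where $0<L_p<\infty$. Let $F=f+h$. The Taylor polynomial is $\Omega_p(f,x;y)=f(x)+\sum_{k=1}^p\frac1{k!}D^kf(x)[y-x]^k$, and its gradient in $y$ is $\nabla\Omega_p(f,x;y)=\sum_{k=1}^p\frac{1}{(k-1)!}D^kf(x)[y-x]^{k-1}\in\mathbb{E}^*$. *)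

theory Defs
  imports "HOL-Analysis.Analysis"
begin

text \<open>The space E is modelled as a Euclidean space 'a; its dual E* is identified with 'a
  through the inner product, so the pairing <s,x> is  inner s x.
  B : E -> E* is then a linear map 'a => 'a, self-adjoint and positive definite.\<close>

definition self_adjoint_pd :: "('a::euclidean_space \<Rightarrow> 'a) \<Rightarrow> bool" where
  "self_adjoint_pd B \<longleftrightarrow> linear B \<and> (\<forall>x y. inner (B x) y = inner x (B y))
      \<and> (\<forall>x. x \<noteq> 0 \<longrightarrow> inner (B x) x > 0)"

definition Bnorm :: "('a::euclidean_space \<Rightarrow> 'a) \<Rightarrow> 'a \<Rightarrow> real" where
  "Bnorm B x = sqrt (inner (B x) x)"

definition Bdnorm :: "('a::euclidean_space \<Rightarrow> 'a) \<Rightarrow> 'a \<Rightarrow> real" where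
  "Bdnorm B g = sqrt (inner g (inv B g))"

text \<open>Riesz representative in E (= E*) of a linear functional.\<close>
definition dual_vec :: "('a::euclidean_space \<Rightarrow> real) \<Rightarrow> 'a" where
  "dual_vec \<phi> = (\<Sum>b\<in>Basis. \<phi> b *\<^sub>R b)"

text \<open>Norm of a p-linear form A (given as a function of a list of p arguments):
  max over B-unit vectors of |A[v]^p|.\<close>
definition form_norm :: "('a::euclidean_space \<Rightarrow> 'a) \<Rightarrow> nat \<Rightarrow> ('a list \<Rightarrow> real) \<Rightarrow> real" where
  "form_norm B p A = (SUP v\<in>{v. Bnorm B v \<le> 1}. \<bar>A (replicate p v)\<bar>)"

text \<open>D k x hs = D^k f(x)[hs_1,...,hs_k]; D is the family of Frechet derivatives of f
  up to order p on the open set U.\<close>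
definition derivs_upto :: "nat \<Rightarrow> ('a::euclidean_space \<Rightarrow> real) \<Rightarrow> (nat \<Rightarrow> 'a \<Rightarrow> 'a list \<Rightarrow> real)
    \<Rightarrow> 'a set \<Rightarrow> bool" where
  "derivs_upto p f D U \<longleftrightarrow> (\<forall>x\<in>U. D 0 x [] = f x) \<and>
     (\<forall>k<p. \<forall>x\<in>U. \<forall>hs. length hs = k \<longrightarrow>
        ((\<lambda>z. D k z hs) has_derivative (\<lambda>v. D (Suc k) x (v # hs))) (at x))"

definition taylor :: "nat \<Rightarrow> ('a::euclidean_space \<Rightarrow> real) \<Rightarrow> (nat \<Rightarrow> 'a \<Rightarrow> 'a list \<Rightarrow> real)
    \<Rightarrow> 'a \<Rightarrow> 'a \<Rightarrow> real" where
  "taylor p f D x y = f x + (\<Sum>k=1..p. D k x (replicate k (y - x)) / fact k)"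

definition taylor_grad :: "nat \<Rightarrow> (nat \<Rightarrow> 'a::euclidean_space \<Rightarrow> 'a list \<Rightarrow> real)
    \<Rightarrow> 'a \<Rightarrow> 'a \<Rightarrow> 'a" where
  "taylor_grad p D x y = dual_vec (\<lambda>u. \<Sum>k=1..p. D k x (u # replicate (k - 1) (y - x)) / fact (k - 1))"

text \<open>Extended-valued functions h : E -> R \<union> {+\<infinity>} as ereal-valued functions.\<close>
definition edom :: "('a \<Rightarrow> ereal) \<Rightarrow> 'a set" where
  "edom h = {x. h x < \<infinity>}"

definition proper_fun :: "('a \<Rightarrow> ereal) \<Rightarrow> bool" where
  "proper_fun h \<longleftrightarrow> (\<exists>x. h x < \<infinity>) \<and> (\<forall>x. h x > -\<infinity>)"

definition closed_fun :: "('a::topological_space \<Rightarrow> ereal) \<Rightarrow> bool" where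
  "closed_fun h \<longleftrightarrow> closed {(x, t::real). h x \<le> ereal t}"

definition convex_fun :: "('a::real_vector \<Rightarrow> ereal) \<Rightarrow> bool" where
  "convex_fun h \<longleftrightarrow> (\<forall>x y t. 0 \<le> t \<and> t \<le> 1 \<longrightarrow>
      h ((1 - t) *\<^sub>R x + t *\<^sub>R y) \<le> ereal (1 - t) * h x + ereal t * h y)"

end

theory Submission
  imports Defs "HOL-Library.Multiset"
begin

lemma lin_expand:
  fixes \<phi> :: "'a::euclidean_space \<Rightarrow> real"
  assumes "linear \<phi>"
  shows "\<phi> v = (\<Sum>b\<in>Basis. (v \<bullet> b) * \<phi> b)"
  using Linear_Algebra.linear_componentwise[OF assms, of v 1] by simp

lemma dual_vec_inner:
  fixes \<phi> :: "'a::euclidean_space \<Rightarrow> real"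
  assumes "linear \<phi>"
  shows "inner (dual_vec \<phi>) u = \<phi> u"
  unfolding dual_vec_def using lin_expand[OF assms, of u]
  by (simp add: inner_sum_right inner_commute mult.commute)

lemma line_deriv:
  fixes g :: "'a::real_normed_vector \<Rightarrow> real"
  assumes "(g has_derivative G) (at (p0 + s *\<^sub>R a))"
  shows "((\<lambda>s. g (p0 + s *\<^sub>R a)) has_real_derivative G a) (at s)"
proof -
  have l: "linear G" using assms has_derivative_linear by blast
  have "((\<lambda>s. p0 + s *\<^sub>R a) has_derivative (\<lambda>h. h *\<^sub>R a)) (at s)"
    by (auto intro!: derivative_eq_intros)
  from has_derivative_compose[OF this assms]
  have "((\<lambda>s. g (p0 + s *\<^sub>R a)) has_derivative (\<lambda>h. G (h *\<^sub>R a))) (at s)" .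
  moreover have "(\<lambda>h. G (h *\<^sub>R a)) = (*) (G a)"
    using l by (auto simp: linear_cmul fun_eq_iff)
  ultimately show ?thesis by (simp add: has_field_derivative_def)
qed

lemma schwarz_half:
  fixes g :: "'a::real_normed_vector \<Rightarrow> real"
  assumes U: "open U" "y \<in> U"
    and d1: "\<And>z. z \<in> U \<Longrightarrow> (g has_derivative G z) (at z)"
    and d2: "((\<lambda>z. G z a) has_derivative (\<lambda>w. H w a)) (at y)"
    and e: "e > 0"
  shows "\<exists>d>0. \<forall>t. 0 < t \<and> t < d \<longrightarrow>
     \<bar>g (y + t *\<^sub>R a + t *\<^sub>R b) - g (y + t *\<^sub>R a) - g (y + t *\<^sub>R b) + g y - t^2 * H b a\<bar>
       \<le> e * t^2 * (2 * norm a + norm b)"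
proof -
  from d2[unfolded has_derivative_at_alt] e obtain d1 where d1p: "d1 > 0"
    and d1b: "\<And>z. norm (z - y) < d1 \<Longrightarrow> norm (G z a - G y a - H (z - y) a) \<le> e * norm (z - y)"
    and bl: "bounded_linear (\<lambda>w. H w a)"
    by blast
  have lH: "linear (\<lambda>w. H w a)" using bl bounded_linear.linear by blast
  from U obtain d0 where d0p: "d0 > 0" and d0b: "ball y d0 \<subseteq> U"
    using open_contains_ball by blast
  define X where "X = norm a + norm b"
  have X0: "X \<ge> 0" unfolding X_def by simp
  define d where "d = min d1 d0 / (X + 1)"
  have dp: "d > 0" unfolding d_def using d1p d0p X0 by auto
  have key: "t * X < min d1 d0" if "0 < t" "t < d" for t
  proof -
    have "t * X \<le> d * X" using that X0 by (simp add: mult_right_mono)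
    also have "\<dots> < d * (X + 1)" using dp by simp
    also have "\<dots> = min d1 d0" unfolding d_def using X0 by simp
    finally show ?thesis .
  qed
  show ?thesis
  proof (intro exI[of _ d] conjI allI impI dp)
    fix t assume tt: "0 < t \<and> t < d"
    hence t0: "0 < t" and td: "t < d" by auto
    have tX: "t * X < min d1 d0" using key t0 td by blast
    define \<psi> where "\<psi> s = g ((y + t *\<^sub>R b) + s *\<^sub>R a) - g (y + s *\<^sub>R a)" for s
    have nrm: "norm (s *\<^sub>R a + t *\<^sub>R b) < min d1 d0" "norm (s *\<^sub>R a) < min d1 d0"
      if "0 \<le> s" "s \<le> t" for s
    proof -
      have "norm (s *\<^sub>R a + t *\<^sub>R b) \<le> s * norm a + t * norm b"
        using norm_triangle_ineq[of "s *\<^sub>R a" "t *\<^sub>R b"] that t0 by simp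
      also have "\<dots> \<le> t * X" unfolding X_def using that
        by (simp add: distrib_left mult_right_mono)
      finally show "norm (s *\<^sub>R a + t *\<^sub>R b) < min d1 d0" using tX by linarith
      have "norm (s *\<^sub>R a) \<le> t * X" unfolding X_def using that
        by (simp add: distrib_left mult_right_mono add_increasing2)
      then show "norm (s *\<^sub>R a) < min d1 d0" using tX by linarith
    qed
    have der: "DERIV \<psi> s :> G ((y + t *\<^sub>R b) + s *\<^sub>R a) a - G (y + s *\<^sub>R a) a"
      if "0 \<le> s" "s \<le> t" for s
    proof -
      have q1: "dist y ((y + t *\<^sub>R b) + s *\<^sub>R a) = norm (s *\<^sub>R a + t *\<^sub>R b)"
        unfolding dist_norm by (metis add.commute add_diff_cancel_left' norm_minus_commute add.assoc)
      have q2: "dist y (y + s *\<^sub>R a) = norm (s *\<^sub>R a)"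
        unfolding dist_norm by (metis add_diff_cancel_left' norm_minus_commute)
      have "(y + t *\<^sub>R b) + s *\<^sub>R a \<in> U"
        using nrm(1)[OF that] d0b q1 by (auto simp: subset_iff)
      moreover have "y + s *\<^sub>R a \<in> U"
        using nrm(2)[OF that] d0b q2 by (auto simp: subset_iff)
      ultimately show ?thesis unfolding \<psi>_def
        by (intro derivative_intros line_deriv d1)
    qed
    obtain \<xi> where \<xi>: "0 < \<xi>" "\<xi> < t"
      and mv: "\<psi> t - \<psi> 0 = (t - 0) * (G ((y + t *\<^sub>R b) + \<xi> *\<^sub>R a) a - G (y + \<xi> *\<^sub>R a) a)"
      using MVT2[OF t0, of \<psi> "\<lambda>s. G ((y + t *\<^sub>R b) + s *\<^sub>R a) a - G (y + s *\<^sub>R a) a"] der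
      by auto
    define z1 where "z1 = (y + t *\<^sub>R b) + \<xi> *\<^sub>R a"
    define z2 where "z2 = y + \<xi> *\<^sub>R a"
    have z1y: "z1 - y = \<xi> *\<^sub>R a + t *\<^sub>R b" unfolding z1_def by simp
    have z2y: "z2 - y = \<xi> *\<^sub>R a" unfolding z2_def by simp
    have e1: "\<bar>G z1 a - G y a - H (\<xi> *\<^sub>R a + t *\<^sub>R b) a\<bar> \<le> e * norm (\<xi> *\<^sub>R a + t *\<^sub>R b)"
      using d1b[of z1] nrm(1)[of \<xi>] \<xi> z1y by auto
    have e2: "\<bar>G z2 a - G y a - H (\<xi> *\<^sub>R a) a\<bar> \<le> e * norm (\<xi> *\<^sub>R a)"
      using d1b[of z2] nrm(2)[of \<xi>] \<xi> z2y by auto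
    have n1: "norm (\<xi> *\<^sub>R a + t *\<^sub>R b) \<le> t * (norm a + norm b)"
    proof -
      have "norm (\<xi> *\<^sub>R a + t *\<^sub>R b) \<le> \<xi> * norm a + t * norm b"
        using norm_triangle_ineq[of "\<xi> *\<^sub>R a" "t *\<^sub>R b"] \<xi> by simp
      also have "\<dots> \<le> t * (norm a + norm b)" using \<xi> by (simp add: distrib_left mult_right_mono)
      finally show ?thesis .
    qed
    have n2: "norm (\<xi> *\<^sub>R a) \<le> t * norm a" using \<xi> by (simp add: mult_right_mono)
    have Hlin: "H (\<xi> *\<^sub>R a + t *\<^sub>R b) a - H (\<xi> *\<^sub>R a) a = t * H b a"
    proof -
      have "H (\<xi> *\<^sub>R a + t *\<^sub>R b) a = H (\<xi> *\<^sub>R a) a + H (t *\<^sub>R b) a"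
        using linear_add[OF lH, of "\<xi> *\<^sub>R a" "t *\<^sub>R b"] by simp
      moreover have "H (t *\<^sub>R b) a = t * H b a" using linear_cmul[OF lH, of t b] by simp
      ultimately show ?thesis by simp
    qed
    have "\<bar>(G z1 a - G z2 a) - t * H b a\<bar>
        \<le> \<bar>G z1 a - G y a - H (\<xi> *\<^sub>R a + t *\<^sub>R b) a\<bar> + \<bar>G z2 a - G y a - H (\<xi> *\<^sub>R a) a\<bar>"
      using Hlin by linarith
    also have "\<dots> \<le> e * (t * (norm a + norm b)) + e * (t * norm a)"
      using e1 e2 mult_left_mono[OF n1, of e] mult_left_mono[OF n2, of e] e by linarith
    also have "\<dots> = e * t * (2 * norm a + norm b)" by (simp add: algebra_simps)
    finally have est: "\<bar>(G z1 a - G z2 a) - t * H b a\<bar> \<le> e * t * (2 * norm a + norm b)" .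
    have "\<psi> t - \<psi> 0 = g (y + t *\<^sub>R a + t *\<^sub>R b) - g (y + t *\<^sub>R a) - g (y + t *\<^sub>R b) + g y"
      unfolding \<psi>_def by (simp add: algebra_simps)
    hence "g (y + t *\<^sub>R a + t *\<^sub>R b) - g (y + t *\<^sub>R a) - g (y + t *\<^sub>R b) + g y = t * (G z1 a - G z2 a)"
      using mv unfolding z1_def z2_def by simp
    hence "g (y + t *\<^sub>R a + t *\<^sub>R b) - g (y + t *\<^sub>R a) - g (y + t *\<^sub>R b) + g y - t^2 * H b a
        = t * ((G z1 a - G z2 a) - t * H b a)"
      by (simp add: power2_eq_square right_diff_distrib)
    hence "\<bar>g (y + t *\<^sub>R a + t *\<^sub>R b) - g (y + t *\<^sub>R a) - g (y + t *\<^sub>R b) + g y - t^2 * H b a\<bar>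
        = t * \<bar>(G z1 a - G z2 a) - t * H b a\<bar>"
      using t0 by (simp add: abs_mult)
    also have "\<dots> \<le> t * (e * t * (2 * norm a + norm b))" using est t0 by (simp add: mult_left_mono)
    finally show "\<bar>g (y + t *\<^sub>R a + t *\<^sub>R b) - g (y + t *\<^sub>R a) - g (y + t *\<^sub>R b) + g y - t^2 * H b a\<bar>
       \<le> e * t^2 * (2 * norm a + norm b)" by (simp add: power2_eq_square algebra_simps)
  qed
qed

lemma schwarz:
  fixes g :: "'a::real_normed_vector \<Rightarrow> real"
  assumes U: "open U" "y \<in> U"
    and d1: "\<And>z. z \<in> U \<Longrightarrow> (g has_derivative G z) (at z)"
    and d2: "\<And>v. ((\<lambda>z. G z v) has_derivative (\<lambda>w. H w v)) (at y)"
  shows "H a b = H b a"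
proof (rule ccontr)
  assume ne: "H a b \<noteq> H b a"
  define K where "K = 3 * (norm a + norm b)"
  have K0: "K \<ge> 0" unfolding K_def by simp
  define e where "e = \<bar>H a b - H b a\<bar> / (K + 1)"
  have e0: "e > 0" unfolding e_def using ne K0 by auto
  obtain da where da: "da > 0" and hA: "\<And>t. 0 < t \<Longrightarrow> t < da \<Longrightarrow>
     \<bar>g (y + t *\<^sub>R a + t *\<^sub>R b) - g (y + t *\<^sub>R a) - g (y + t *\<^sub>R b) + g y - t^2 * H b a\<bar>
       \<le> e * t^2 * (2 * norm a + norm b)"
    using schwarz_half[where U=U and y=y and g=g and G=G and a=a and H=H and e=e and b=b, OF U d1 d2[of a] e0] by blast
  obtain db where db: "db > 0" and hB: "\<And>t. 0 < t \<Longrightarrow> t < db \<Longrightarrow>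
     \<bar>g (y + t *\<^sub>R b + t *\<^sub>R a) - g (y + t *\<^sub>R b) - g (y + t *\<^sub>R a) + g y - t^2 * H a b\<bar>
       \<le> e * t^2 * (2 * norm b + norm a)"
    using schwarz_half[where U=U and y=y and g=g and G=G and a=b and H=H and e=e and b=a, OF U d1 d2[of b] e0] by blast
  define t where "t = min da db / 2"
  have t0: "t > 0" "t < da" "t < db" unfolding t_def using da db by auto
  have c: "y + t *\<^sub>R b + t *\<^sub>R a = y + t *\<^sub>R a + t *\<^sub>R b" by (simp add: algebra_simps)
  define Q where "Q = g (y + t *\<^sub>R a + t *\<^sub>R b) - g (y + t *\<^sub>R a) - g (y + t *\<^sub>R b) + g y"
  have q1: "\<bar>Q - t^2 * H b a\<bar> \<le> e * t^2 * (2 * norm a + norm b)"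
    using hA[OF t0(1,2)] unfolding Q_def .
  have q2: "\<bar>Q - t^2 * H a b\<bar> \<le> e * t^2 * (2 * norm b + norm a)"
    using hB[OF t0(1,3)] unfolding Q_def c by (simp add: algebra_simps)
  have "(Q - t^2 * H b a) - (Q - t^2 * H a b) = t^2 * (H a b - H b a)" by (simp add: algebra_simps)
  hence "t^2 * \<bar>H a b - H b a\<bar> = \<bar>(Q - t^2 * H b a) - (Q - t^2 * H a b)\<bar>"
    by (simp add: abs_mult)
  also have "\<dots> \<le> \<bar>Q - t^2 * H b a\<bar> + \<bar>Q - t^2 * H a b\<bar>" by (rule abs_triangle_ineq4)
  also have "\<dots> \<le> e * t^2 * (2 * norm a + norm b) + e * t^2 * (2 * norm b + norm a)"
    using q1 q2 by (rule add_mono)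
  also have "\<dots> = t^2 * (e * K)" unfolding K_def by (simp add: algebra_simps)
  finally have "\<bar>H a b - H b a\<bar> \<le> e * K" using t0 by simp
  also have "e * K < \<bar>H a b - H b a\<bar>"
    unfolding e_def using ne K0 by (simp add: field_simps)
  finally show False by simp
qed

lemma perm_inv:
  assumes tail: "\<And>a t t'. length t = n \<Longrightarrow> mset t = mset t' \<Longrightarrow> F (a#t) = F (a#t')"
    and swap: "\<And>a b t. Suc (length t) = n \<Longrightarrow> F (a#b#t) = F (b#a#t)"
    and len: "length xs = Suc n" and ms: "mset xs = mset ys"
  shows "F xs = F ys"
proof -
  have leny: "length ys = Suc n" using mset_eq_length[OF ms] len by simp
  obtain a t where xs: "xs = a # t" using len by (cases xs) auto
  obtain b t' where ys: "ys = b # t'" using leny by (cases ys) auto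
  have lt: "length t = n" "length t' = n" using len leny xs ys by auto
  show ?thesis
  proof (cases "a = b")
    case True
    then have "mset t = mset t'" using ms xs ys by simp
    then show ?thesis using tail[where a=a and t=t and t'=t', OF lt(1)] xs ys True by simp
  next
    case False
    have "a \<in># mset ys" using ms xs by (metis list.set_intros(1) set_mset_mset)
    then have ain: "a \<in> set t'" using False ys by simp
    define t'' where "t'' = remove1 a t'"
    have mt': "mset t' = mset (a # t'')" unfolding t''_def using ain by simp
    have lt'': "Suc (length t'') = n" using mset_eq_length[OF mt'] lt(2) by simp
    have "F ys = F (b # a # t'')" using tail[where a=b and t=t' and t'="a # t''", OF lt(2) mt'] ys by simp
    also have "\<dots> = F (a # b # t'')" using swap[where a=b and b=a and t=t'', OF lt''] by simp
    also have "\<dots> = F xs"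
    proof -
      have "add_mset a (mset t) = add_mset a (mset (b # t''))"
        using ms xs ys mt' by simp
      then have "mset t = mset (b # t'')" by simp
      then show ?thesis using tail[where a=a and t=t and t'="b # t''", OF lt(1)] xs by simp
    qed
    finally show ?thesis by simp
  qed
qed

lemma D_lin:
  assumes "derivs_upto p f D U" "k < p" "z \<in> U" "length hs = k"
  shows "linear (\<lambda>v. D (Suc k) z (v # hs))"
  using assms unfolding derivs_upto_def using has_derivative_linear by blast

lemma D_deriv:
  assumes "derivs_upto p f D U" "k < p" "z \<in> U" "length hs = k"
  shows "((\<lambda>z. D k z hs) has_derivative (\<lambda>v. D (Suc k) z (v # hs))) (at z)"
  using assms unfolding derivs_upto_def by blast

lemma D_sym:
  fixes D :: "nat \<Rightarrow> 'a::euclidean_space \<Rightarrow> 'a list \<Rightarrow> real"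
  assumes fD: "derivs_upto p f D U" and U: "open U"
  shows "k \<le> p \<Longrightarrow> y \<in> U \<Longrightarrow> length hs = k \<Longrightarrow> mset hs = mset hs' \<Longrightarrow> D k y hs = D k y hs'"
proof (induction k arbitrary: y hs hs')
  case 0
  then show ?case by simp
next
  case (Suc k)
  show ?case
  proof (rule perm_inv[where F = "D (Suc k) y" and n = k])
    fix a :: 'a and t t' :: "'a list" assume lt: "length t = k" and mt: "mset t = mset t'"
    have lt': "length t' = k" using mset_eq_length[OF mt] lt by simp
    have kp: "k < p" using Suc.prems by simp
    have d1: "((\<lambda>z. D k z t) has_derivative (\<lambda>v. D (Suc k) y (v # t))) (at y)"
      using D_deriv[OF fD kp Suc.prems(2) lt] .
    have d2: "((\<lambda>z. D k z t') has_derivative (\<lambda>v. D (Suc k) y (v # t'))) (at y)"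
      using D_deriv[OF fD kp Suc.prems(2) lt'] .
    have d1': "((\<lambda>z. D k z t') has_derivative (\<lambda>v. D (Suc k) y (v # t))) (at y)"
      using has_derivative_transform_within_open[OF d1 U Suc.prems(2), of "\<lambda>z. D k z t'"]
        Suc.IH[of _ t t'] kp lt mt by simp
    from has_derivative_unique[OF d1' d2] show "D (Suc k) y (a # t) = D (Suc k) y (a # t')"
      by (simp add: fun_eq_iff)
  next
    fix a b :: 'a and t :: "'a list" assume lt: "Suc (length t) = k"
    then obtain k' where k: "k = Suc k'" and lt': "length t = k'" by auto
    have kp: "Suc k' < p" using Suc.prems k by simp
    have "D (Suc (Suc k')) y (a # b # t) = D (Suc (Suc k')) y (b # a # t)"
    proof (rule schwarz[where U = U and y = y and g = "\<lambda>z. D k' z t"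
          and G = "\<lambda>z v. D (Suc k') z (v # t)" and H = "\<lambda>w v. D (Suc (Suc k')) y (w # v # t)"])
      show "open U" by fact
      show "y \<in> U" by fact
      fix z assume "z \<in> U"
      then show "((\<lambda>z. D k' z t) has_derivative (\<lambda>v. D (Suc k') z (v # t))) (at z)"
        using D_deriv[OF fD _ _ lt'] kp by simp
    next
      fix v
      show "((\<lambda>z. D (Suc k') z (v # t)) has_derivative (\<lambda>w. D (Suc (Suc k')) y (w # v # t))) (at y)"
        using D_deriv[OF fD kp Suc.prems(2), of "v # t"] lt' by simp
    qed
    then show "D (Suc k) y (a # b # t) = D (Suc k) y (b # a # t)" using k by simp
  qed (use Suc.prems in auto)
qed

definition bip :: "('a::euclidean_space \<Rightarrow> 'a) \<Rightarrow> 'a \<Rightarrow> 'a \<Rightarrow> real" where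
  "bip B x y = inner (B x) y"

context
  fixes B :: "'a::euclidean_space \<Rightarrow> 'a"
  assumes B: "self_adjoint_pd B"
begin

lemma B_lin: "linear B" using B unfolding self_adjoint_pd_def by blast

lemma bip_sym: "bip B x y = bip B y x"
  using B unfolding self_adjoint_pd_def bip_def by (simp add: inner_commute)

lemma bip_add_left: "bip B (x + y) z = bip B x z + bip B y z"
  unfolding bip_def using linear_add[OF B_lin] by (simp add: inner_add_left)

lemma bip_add_right: "bip B z (x + y) = bip B z x + bip B z y"
  unfolding bip_def by (simp add: inner_add_right)

lemma bip_scale_left: "bip B (c *\<^sub>R x) z = c * bip B x z"
  unfolding bip_def using linear_cmul[OF B_lin] by simp

lemma bip_scale_right: "bip B z (c *\<^sub>R x) = c * bip B z x"
  unfolding bip_def by simp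

lemma bip_minus_left: "bip B (- x) z = - bip B x z"
  using bip_scale_left[of "-1" x z] by simp

lemma bip_minus_right: "bip B z (- x) = - bip B z x"
  using bip_scale_right[of z "-1" x] by simp

lemma bip_diff_left: "bip B (x - y) z = bip B x z - bip B y z"
  using bip_add_left[of x "- y" z] bip_minus_left[of y z] by simp

lemma bip_diff_right: "bip B z (x - y) = bip B z x - bip B z y"
  using bip_add_right[of z x "- y"] bip_minus_right[of z y] by simp

lemma bip_zero_left[simp]: "bip B 0 z = 0"
  using bip_scale_left[of 0 0 z] by simp

lemma bip_zero_right[simp]: "bip B z 0 = 0"
  unfolding bip_def by simp

lemma bip_pos: "x \<noteq> 0 \<Longrightarrow> bip B x x > 0"
  using B unfolding self_adjoint_pd_def bip_def by blast

lemma bip_nonneg: "bip B x x \<ge> 0"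
  using bip_pos[of x] by (cases "x = 0") auto

lemma bip_eq0: "bip B x x = 0 \<longleftrightarrow> x = 0"
  using bip_pos[of x] by (cases "x = 0") auto

lemmas bip_simps = bip_add_left bip_add_right bip_scale_left bip_scale_right
  bip_minus_left bip_minus_right bip_diff_left bip_diff_right

lemma Bnorm_bip: "Bnorm B x = sqrt (bip B x x)"
  unfolding Bnorm_def bip_def by simp

lemma Bnorm_sq: "(Bnorm B x)^2 = bip B x x"
  unfolding Bnorm_bip using bip_nonneg[of x] by simp

lemma Bnorm_nonneg: "Bnorm B x \<ge> 0"
  unfolding Bnorm_bip using bip_nonneg[of x] by simp

lemma Bnorm_eq0: "Bnorm B x = 0 \<longleftrightarrow> x = 0"
  unfolding Bnorm_bip using bip_eq0 bip_nonneg by simp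

lemma Bnorm_scale: "Bnorm B (c *\<^sub>R x) = \<bar>c\<bar> * Bnorm B x"
proof -
  have "bip B (c *\<^sub>R x) (c *\<^sub>R x) = c^2 * bip B x x"
    by (simp add: bip_simps power2_eq_square)
  then show ?thesis unfolding Bnorm_bip by (simp add: real_sqrt_mult)
qed

lemma bip_CS: "\<bar>bip B x y\<bar> \<le> Bnorm B x * Bnorm B y"
proof (cases "y = 0")
  case True then show ?thesis by (simp add: Bnorm_nonneg)
next
  case False
  define t where "t = - bip B x y / bip B y y"
  have yy: "bip B y y > 0" using bip_pos False by blast
  have "0 \<le> bip B (x + t *\<^sub>R y) (x + t *\<^sub>R y)" by (rule bip_nonneg)
  also have "\<dots> = bip B x x + 2 * t * bip B x y + t^2 * bip B y y"
    by (simp add: bip_simps bip_sym[of y x] power2_eq_square algebra_simps)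
  also have "\<dots> = bip B x x - (bip B x y)^2 / bip B y y"
    unfolding t_def using yy by (simp add: power2_eq_square field_simps)
  finally have "(bip B x y)^2 \<le> bip B x x * bip B y y"
    using yy by (simp add: field_simps)
  then have "sqrt ((bip B x y)^2) \<le> sqrt (bip B x x * bip B y y)"
    using real_sqrt_le_mono by blast
  then show ?thesis unfolding Bnorm_bip by (simp add: real_sqrt_mult)
qed

lemma B_cont: "continuous_on S B"
  using B_lin linear_conv_bounded_linear linear_continuous_on by blast

lemma bip_cont[continuous_intros]:
  assumes "continuous_on S f" "continuous_on S g"
  shows "continuous_on S (\<lambda>t. bip B (f t) (g t))"
  unfolding bip_def
  by (intro continuous_intros continuous_on_compose2[OF B_cont assms(1)] assms) auto

lemma Bnorm_cont[continuous_intros]: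
  assumes "continuous_on S f"
  shows "continuous_on S (\<lambda>t. Bnorm B (f t))"
  unfolding Bnorm_bip by (intro continuous_intros assms)

lemma B_lower: "\<exists>m>0. \<forall>x. bip B x x \<ge> m * (norm x)^2"
proof -
  have cs: "compact (sphere (0::'a) 1)" by simp
  have ne: "sphere (0::'a) 1 \<noteq> {}" by simp
  have ct: "continuous_on (sphere 0 1) (\<lambda>x. bip B x x)"
    by (intro continuous_intros)
  obtain x0 where x0: "x0 \<in> sphere 0 1" and mn: "\<forall>y\<in>sphere 0 1. bip B x0 x0 \<le> bip B y y"
    using continuous_attains_inf[OF cs ne ct] by blast
  have x00: "x0 \<noteq> 0" using x0 by auto
  define m where "m = bip B x0 x0"
  have m0: "m > 0" unfolding m_def using bip_pos[OF x00] .
  have "bip B x x \<ge> m * (norm x)^2" for x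
  proof (cases "x = 0")
    case True then show ?thesis by simp
  next
    case False
    define u where "u = (1 / norm x) *\<^sub>R x"
    have u: "u \<in> sphere 0 1" unfolding u_def using False by simp
    have "x = norm x *\<^sub>R u" unfolding u_def using False by simp
    then have "bip B x x = (norm x)^2 * bip B u u"
      by (metis bip_scale_left bip_scale_right mult.assoc power2_eq_square)
    moreover have "m \<le> bip B u u" using mn u unfolding m_def by blast
    ultimately show ?thesis using mult_right_mono[of m "bip B u u" "(norm x)^2"] by (simp add: mult.commute)
  qed
  then show ?thesis using m0 by blast
qed

lemma Sph_compact: "compact {v. Bnorm B v = 1}"
  unfolding compact_eq_bounded_closed
proof (rule conjI)
  obtain m where m0: "m > 0" and mb: "\<And>x. bip B x x \<ge> m * (norm x)^2" using B_lower by blast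
  show "bounded {v. Bnorm B v = 1}"
    unfolding bounded_iff
  proof (intro exI allI impI ballI)
    fix x assume "x \<in> {v. Bnorm B v = 1}"
    then have "bip B x x = 1" using Bnorm_sq[of x] by simp
    then have "(norm x)^2 \<le> 1 / m" using mb[of x] m0 by (simp add: field_simps)
    then show "norm x \<le> sqrt (1/m)" by (rule real_le_rsqrt)
  qed
  show "closed {v. Bnorm B v = 1}"
    using closed_Collect_eq[of "\<lambda>v. Bnorm B v" "\<lambda>_. 1"] Bnorm_cont[of UNIV "\<lambda>x. x"]
    by (simp add: continuous_on_id continuous_on_const)
qed

lemma Sph_ne: "\<exists>v. Bnorm B v = 1"
proof -
  obtain b :: 'a where b: "b \<noteq> 0" using nonzero_Basis by blast
  have "Bnorm B b > 0" using Bnorm_eq0[of b] Bnorm_nonneg[of b] b by linarith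
  then have "Bnorm B ((1 / Bnorm B b) *\<^sub>R b) = 1" by (simp add: Bnorm_scale)
  then show ?thesis by blast
qed

lemma normalize_B:
  assumes "x \<noteq> 0"
  shows "Bnorm B ((1 / Bnorm B x) *\<^sub>R x) = 1" "x = Bnorm B x *\<^sub>R ((1 / Bnorm B x) *\<^sub>R x)"
proof -
  have "Bnorm B x > 0" using Bnorm_eq0[of x] Bnorm_nonneg[of x] assms by linarith
  then show "Bnorm B ((1 / Bnorm B x) *\<^sub>R x) = 1" "x = Bnorm B x *\<^sub>R ((1 / Bnorm B x) *\<^sub>R x)"
    by (simp_all add: Bnorm_scale)
qed

end

definition symf :: "nat \<Rightarrow> ('a::euclidean_space list \<Rightarrow> real) \<Rightarrow> bool" where
  "symf n A \<longleftrightarrow> (\<forall>xs ys. length xs = n \<longrightarrow> mset xs = mset ys \<longrightarrow> A xs = A ys) \<and>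
     (0 < n \<longrightarrow> (\<forall>t. length t = n - 1 \<longrightarrow> linear (\<lambda>v. A (v # t))))"

lemma symf_perm: "symf n A \<Longrightarrow> length xs = n \<Longrightarrow> mset xs = mset ys \<Longrightarrow> A xs = A ys"
  unfolding symf_def by blast

lemma symf_lin: "symf n A \<Longrightarrow> 0 < n \<Longrightarrow> length t = n - 1 \<Longrightarrow> linear (\<lambda>v. A (v # t))"
  unfolding symf_def by blast

lemma symf_Cons:
  assumes "symf (Suc n) A"
  shows "symf n (\<lambda>t. A (b # t))"
  unfolding symf_def
proof (intro conjI allI impI)
  fix xs ys :: "'a list" assume "length xs = n" "mset xs = mset ys"
  then show "A (b # xs) = A (b # ys)" using symf_perm[OF assms, of "b # xs" "b # ys"] by simp
next
  fix t :: "'a list" assume n: "0 < n" and t: "length t = n - 1"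
  have "(\<lambda>v. A (b # v # t)) = (\<lambda>v. A (v # b # t))"
    using symf_perm[OF assms, of "b # _ # t"] t n by (auto simp: fun_eq_iff)
  then show "linear (\<lambda>v. A (b # v # t))"
    using symf_lin[OF assms, of "b # t"] t n by simp
qed

lemma mset_upd: "i < length ys \<Longrightarrow> mset (ys[i:=v]) = mset (v # take i ys @ drop (Suc i) ys)"
  by (simp add: upd_conv_take_nth_drop)

lemma symf_slot:
  assumes "symf n A" "length xs = n" "i < n"
  shows "A (xs[i:=v]) = A (v # take i xs @ drop (Suc i) xs)"
  using symf_perm[OF assms(1), of "xs[i:=v]"] mset_upd[of i xs v] assms by simp

lemma symf_slot_lin:
  assumes "symf n A" "length xs = n" "i < n"
  shows "linear (\<lambda>v. A (xs[i:=v]))"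
proof -
  have "linear (\<lambda>v. A (v # take i xs @ drop (Suc i) xs))"
    using symf_lin[OF assms(1)] assms by simp
  then show ?thesis using symf_slot[OF assms] by simp
qed

lemma symf_zero:
  assumes "symf n A" "length xs = n" "0 \<in> set xs"
  shows "A xs = 0"
proof -
  obtain i where i: "i < length xs" "xs ! i = 0" using assms(3) by (metis in_set_conv_nth)
  have "xs = xs[i := 0]" using i list_update_id[of xs i] by simp
  then have "A xs = A (xs[i:=0])" by simp
  also have "\<dots> = 0" using linear_0[OF symf_slot_lin[OF assms(1,2), of i]] i assms(2) by simp
  finally show ?thesis .
qed

lemma symf_scale_aux:
  assumes "symf n A"
  shows "length ys + length zs = n \<Longrightarrow> A (map ((*\<^sub>R) c) ys @ zs) = c ^ length ys * A (ys @ zs)"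
proof (induction ys arbitrary: zs)
  case Nil then show ?case by simp
next
  case (Cons y ys)
  have n0: "0 < n" using Cons.prems by simp
  have "A (map ((*\<^sub>R) c) (y # ys) @ zs) = A (map ((*\<^sub>R) c) ys @ (c *\<^sub>R y # zs))"
    using symf_perm[OF assms, of "map ((*\<^sub>R) c) (y # ys) @ zs"] Cons.prems by simp
  also have "\<dots> = c ^ length ys * A (ys @ (c *\<^sub>R y # zs))"
    using Cons.IH[of "c *\<^sub>R y # zs"] Cons.prems by simp
  also have "A (ys @ (c *\<^sub>R y # zs)) = A (c *\<^sub>R y # ys @ zs)"
    using symf_perm[OF assms, of "ys @ (c *\<^sub>R y # zs)"] Cons.prems by simp
  also have "\<dots> = c * A (y # ys @ zs)"
    using linear_cmul[OF symf_lin[OF assms n0, of "ys @ zs"]] Cons.prems by simp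
  finally show ?case by simp
qed

lemma symf_scale_all:
  assumes "symf n A" "length xs = n"
  shows "A (map ((*\<^sub>R) c) xs) = c ^ n * A xs"
  using symf_scale_aux[OF assms(1), of xs "[]"] assms(2) by simp

lemma cont_form:
  "symf n A \<Longrightarrow> (\<And>i. i < n \<Longrightarrow> continuous_on S (g i)) \<Longrightarrow>
     continuous_on S (\<lambda>t. A (map (\<lambda>i. g i t) [0..<n]))"
proof (induction n arbitrary: A g)
  case 0 then show ?case by (simp add: continuous_on_const)
next
  case (Suc n)
  have exp: "A (map (\<lambda>i. g i t) [0..<Suc n]) =
      (\<Sum>b\<in>Basis. (g 0 t \<bullet> b) * A (b # map (\<lambda>i. g (Suc i) t) [0..<n]))" for t
  proof -
    have "linear (\<lambda>v. A (v # map (\<lambda>i. g (Suc i) t) [0..<n]))"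
      using symf_lin[OF Suc.prems(1)] by simp
    from lin_expand[OF this, of "g 0 t"] show ?thesis by (simp only: map_upt_Suc)
  qed
  have "continuous_on S (\<lambda>t. A (b # map (\<lambda>i. g (Suc i) t) [0..<n]))" for b
    using Suc.IH[OF symf_Cons[OF Suc.prems(1), of b], of "\<lambda>i. g (Suc i)"] Suc.prems(2) by simp
  moreover have "continuous_on S (g 0)" using Suc.prems(2) by simp
  ultimately show ?case unfolding exp
    by (intro continuous_intros) auto
qed

lemma map_fun_upd_upt: "i < n \<Longrightarrow> map (f(i:=v)) [0..<n] = (map f [0..<n])[i:=v]"
  by (rule nth_equalityI) (auto simp: nth_list_update)

lemma sum_split2:
  fixes g :: "nat \<Rightarrow> 'b::comm_monoid_add"
  assumes "j < p" "0 < p" "j \<noteq> 0"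
  shows "(\<Sum>k<p. g k) = g 0 + g j + (\<Sum>k\<in>{..<p} - {0, j}. g k)"
proof -
  have "(\<Sum>k<p. g k) = g 0 + (\<Sum>k\<in>{..<p} - {0}. g k)"
    using sum.remove[of "{..<p}" 0 g] assms by simp
  also have "(\<Sum>k\<in>{..<p} - {0}. g k) = g j + (\<Sum>k\<in>{..<p} - {0} - {j}. g k)"
    using sum.remove[of "{..<p} - {0}" j g] assms by simp
  also have "{..<p} - {0} - {j} = {..<p} - {0, j}" by auto
  finally show ?thesis by (simp add: add.assoc)
qed

lemma banach:
  fixes B :: "'a::euclidean_space \<Rightarrow> 'a" and A :: "'a list \<Rightarrow> real"
  assumes B: "self_adjoint_pd B" and A: "symf p A" and p: "0 < p"
    and M: "\<And>v. Bnorm B v = 1 \<Longrightarrow> \<bar>A (replicate p v)\<bar> \<le> M"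
  shows "length xs = p \<Longrightarrow> (\<forall>x\<in>set xs. Bnorm B x = 1) \<Longrightarrow> \<bar>A xs\<bar> \<le> M"
proof -
  note bs = bip_simps[OF B]
  define Sph where "Sph = {v. Bnorm B v = 1}"
  define C :: "(nat \<Rightarrow> 'a) set" where "C = PiE UNIV (\<lambda>i. if i < p then Sph else {0})"
  have memC: "f \<in> C \<longleftrightarrow> (\<forall>i. (i < p \<longrightarrow> Bnorm B (f i) = 1) \<and> (\<not> i < p \<longrightarrow> f i = 0))" for f
    unfolding C_def Sph_def by (auto simp: PiE_iff)
  have cC: "compact C"
  proof -
    have "compactin (product_topology (\<lambda>i. euclidean) UNIV) C"
      unfolding C_def compactin_PiE using Sph_compact[OF B] by (auto simp: Sph_def)
    then show ?thesis by (simp add: euclidean_product_topology)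
  qed
  obtain v0 where v0: "Bnorm B v0 = 1" using Sph_ne[OF B] by blast
  have neC: "C \<noteq> {}"
  proof -
    have "(\<lambda>i. if i < p then v0 else 0) \<in> C" using v0 by (simp add: memC)
    then show ?thesis by blast
  qed
  define V where "V f = A (map f [0..<p])" for f :: "nat \<Rightarrow> 'a"
  have cV: "continuous_on UNIV V"
    using cont_form[OF A, of UNIV "\<lambda>i f. f i"] unfolding V_def by simp
  have cVa: "continuous_on UNIV (\<lambda>f. \<bar>V f\<bar>)" using cV by (intro continuous_intros)
  obtain f0 where f0: "f0 \<in> C" "\<forall>f\<in>C. \<bar>V f\<bar> \<le> \<bar>V f0\<bar>"
    using continuous_attains_sup[OF cC neC continuous_on_subset[OF cVa]] by blast
  define S where "S = \<bar>V f0\<bar>"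
  have S0: "S \<ge> 0" unfolding S_def by simp
  have SC: "\<And>f. f \<in> C \<Longrightarrow> \<bar>V f\<bar> \<le> S" using f0 unfolding S_def by blast
  define K where "K = C \<inter> {f. \<bar>V f\<bar> = S}"
  have cK: "compact K" unfolding K_def
    using closed_Collect_eq[OF cVa continuous_on_const] cC by blast
  have neK: "K \<noteq> {}" using f0 unfolding K_def S_def by blast
  define \<Phi> where "\<Phi> f = bip B (\<Sum>k<p. f k) (\<Sum>k<p. f k)" for f :: "nat \<Rightarrow> 'a"
  have c\<Phi>: "continuous_on K \<Phi>" unfolding \<Phi>_def
    by (intro bip_cont[OF B] continuous_on_sum continuous_on_subset[OF continuous_on_product_coordinates]) auto
  obtain f1 where f1: "f1 \<in> K" "\<forall>f\<in>K. \<Phi> f \<le> \<Phi> f1"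
    using continuous_attains_sup[OF cK neK c\<Phi>] by blast
  have f1C: "f1 \<in> C" and f1S: "\<bar>V f1\<bar> = S" using f1 unfolding K_def by auto
  have inK: "f \<in> C \<Longrightarrow> \<bar>V f\<bar> = S \<Longrightarrow> f \<in> K" for f unfolding K_def by blast
  have allEq: "\<forall>j<p. f1 j = f1 0"
  proof (rule ccontr)
    assume "\<not> (\<forall>j<p. f1 j = f1 0)"
    then obtain j where j: "j < p" "f1 j \<noteq> f1 0" by blast
    have j0: "j \<noteq> 0"
    proof
      assume "j = 0" then show False using j(2) by simp
    qed
    define x1 where "x1 = f1 0"
    define x2 where "x2 = f1 j"
    have u1: "bip B x1 x1 = 1" using f1C p unfolding memC x1_def
      by (metis Bnorm_sq[OF B] one_power2)
    have u2: "bip B x2 x2 = 1" using f1C j unfolding memC x2_def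
      by (metis Bnorm_sq[OF B] one_power2)
    have x12: "x1 \<noteq> x2" using j unfolding x1_def x2_def by auto
    define xs where "xs = map f1 [0..<p]"
    define ys where "ys = tl xs"
    have lys: "length ys = p - 1" unfolding ys_def xs_def by simp
    have xs_eq: "xs = f1 0 # ys" unfolding ys_def xs_def using p by (cases p) (simp_all only: map_upt_Suc list.sel(3) list.simps)
    define Z where "Z = take (j - 1) ys @ drop j ys"
    have lZ: "length Z = p - 2" unfolding Z_def using lys j j0 by auto
    define b where "b a c = A (a # c # Z)" for a c
    have Vb: "V (f1(0:=a, j:=c)) = b a c" for a c
    proof -
      have "map (f1(0:=a, j:=c)) [0..<p] = xs[0:=a, j:=c]"
        unfolding xs_def using j p by (simp add: map_fun_upd_upt)
      also have "\<dots> = a # ys[j - 1 := c]" using xs_eq j0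
        by (cases j) auto
      finally have e1: "map (f1(0:=a, j:=c)) [0..<p] = a # ys[j - 1 := c]" .
      have "mset (a # ys[j - 1 := c]) = mset (a # c # Z)"
        using mset_upd[of "j - 1" ys c] lys j j0 unfolding Z_def by auto
      then show ?thesis unfolding V_def b_def e1
        using symf_perm[OF A, of "a # ys[j - 1 := c]"] lys p by simp
    qed
    have b_sym: "b a c = b c a" for a c
      unfolding b_def using symf_perm[OF A, of "a # c # Z" "c # a # Z"] lZ j j0 by simp
    have b_lin: "linear (\<lambda>a. b a c)" for c
      unfolding b_def using symf_lin[OF A p, of "c # Z"] lZ j j0 by simp
    have b_addl: "b (a + a') c = b a c + b a' c" for a a' c using linear_add[OF b_lin] by simp
    have b_scl: "b (s *\<^sub>R a) c = s * b a c" for s a c using linear_cmul[OF b_lin] by simp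
    have b_addr: "b c (a + a') = b c a + b c a'" for a a' c using b_addl b_sym by metis
    have b_scr: "b c (s *\<^sub>R a) = s * b c a" for s a c using b_scl b_sym by metis
    have b_minl: "b (- a) c = - b a c" for a c using b_scl[of "-1" a c] by simp
    have b_minr: "b c (- a) = - b c a" for a c using b_scr[of c "-1" a] by simp
    have b_diffl: "b (a - a') c = b a c - b a' c" for a a' c
      using b_addl[of a "- a'" c] b_minl by simp
    have b_diffr: "b c (a - a') = b c a - b c a'" for a a' c
      using b_addr[of c a "- a'"] b_minr by simp
    note bb = b_addl b_scl b_addr b_scr b_minl b_minr b_diffl b_diffr
    have b_bound: "\<bar>b w w\<bar> \<le> S * bip B w w" for w
    proof (cases "w = 0")
      case True
      then show ?thesis using b_scl[of 0 0 0] bip_zero_left[OF B] by simp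
    next
      case False
      define n where "n = Bnorm B w"
      define wh where "wh = (1 / n) *\<^sub>R w"
      have whu: "Bnorm B wh = 1" and wwh: "w = n *\<^sub>R wh"
        using normalize_B[OF B False] unfolding wh_def n_def by auto
      have "f1(0:=wh, j:=wh) \<in> C" using f1C whu j p unfolding memC by auto
      then have "\<bar>b wh wh\<bar> \<le> S" using SC Vb by metis
      moreover have "b w w = n^2 * b wh wh" using wwh by (metis b_scl b_scr mult.assoc power2_eq_square)
      moreover have "bip B w w = n^2" unfolding n_def using Bnorm_sq[OF B] by simp
      ultimately show ?thesis using mult_right_mono[of "\<bar>b wh wh\<bar>" S "n^2"] by (simp add: abs_mult mult.commute)
    qed
    have b12: "b x1 x2 = V f1" using Vb[of x1 x2] unfolding x1_def x2_def by simp
    define \<epsilon> where "\<epsilon> = (if V f1 \<ge> 0 then 1 else - 1 :: real)"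
    have eps: "\<epsilon> * V f1 = S" "\<epsilon> * \<epsilon> = 1" "\<bar>\<epsilon> * X\<bar> = \<bar>X\<bar>" for X
      using f1S unfolding \<epsilon>_def by auto
    define wp where "wp = x1 + x2"
    define wm where "wm = x1 - x2"
    have pol: "b wp wp - b wm wm = 4 * b x1 x2"
      unfolding wp_def wm_def by (simp add: bb b_sym[of x2 x1])
    have ipsum: "bip B wp wp + bip B wm wm = 4"
      unfolding wp_def wm_def using u1 u2 by (simp add: bs bip_sym[OF B, of x2 x1])
    have wm0: "bip B wm wm > 0" unfolding wm_def using bip_pos[OF B] x12 by simp
    have bwp: "\<epsilon> * b wp wp = S * bip B wp wp"
    proof -
      have "\<epsilon> * b wp wp \<le> S * bip B wp wp" using b_bound[of wp] eps(3)[of "b wp wp"] by linarith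
      moreover have "- (\<epsilon> * b wm wm) \<le> S * bip B wm wm" using b_bound[of wm] eps(3)[of "b wm wm"] by linarith
      moreover have "\<epsilon> * b wp wp - \<epsilon> * b wm wm = S * (bip B wp wp + bip B wm wm)"
        using pol b12 eps(1) ipsum by (simp add: right_diff_distrib[symmetric])
      ultimately show ?thesis by (simp add: distrib_left)
    qed
    define R where "R = (\<Sum>k\<in>{..<p} - {0, j}. f1 k)"
    have sum1: "(\<Sum>k<p. f1 k) = wp + R" unfolding R_def wp_def x1_def x2_def
      using sum_split2[OF j(1) p j0, of f1] by simp
    have sumf2: "(\<Sum>k<p. (f1(0:=y, j:=y)) k) = 2 *\<^sub>R y + R" for y
    proof -
      have "(\<Sum>k\<in>{..<p} - {0, j}. (f1(0:=y, j:=y)) k) = R"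
        unfolding R_def by (rule sum.cong) auto
      then show ?thesis using sum_split2[OF j(1) p j0, of "f1(0:=y, j:=y)"] j0
        by (simp add: scaleR_2)
    qed
    have Phi1: "\<Phi> f1 = bip B (wp + R) (wp + R)" unfolding \<Phi>_def sum1 ..
    show False
    proof (cases "wp = 0")
      case False
      define nn where "nn = Bnorm B wp"
      define e where "e = (1 / nn) *\<^sub>R wp"
      have eu: "Bnorm B e = 1" and wpe: "wp = nn *\<^sub>R e"
        using normalize_B[OF B False] unfolding e_def nn_def by auto
      have nn0: "nn > 0" unfolding nn_def using Bnorm_eq0[OF B, of wp] Bnorm_nonneg[OF B, of wp] False by linarith
      have nn2: "nn^2 = bip B wp wp" unfolding nn_def using Bnorm_sq[OF B] by simp
      have ee: "bip B e e = 1" using eu Bnorm_sq[OF B, of e] by simp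
      have "b wp wp = nn^2 * b e e" using wpe by (metis b_scl b_scr mult.assoc power2_eq_square)
      moreover have "bip B wp wp > 0" using nn2 nn0 by (metis zero_less_power)
      ultimately have bee: "\<epsilon> * b e e = S" using bwp nn2 by (simp add: algebra_simps)
      define \<sigma> where "\<sigma> = (if bip B R wp \<ge> 0 then 1 else - 1 :: real)"
      have sig: "\<sigma> * \<sigma> = 1" "\<sigma> * bip B R wp = \<bar>bip B R wp\<bar>" unfolding \<sigma>_def by auto
      define f2 where "f2 = f1(0 := \<sigma> *\<^sub>R e, j := \<sigma> *\<^sub>R e)"
      have "Bnorm B (\<sigma> *\<^sub>R e) = 1" using eu Bnorm_scale[OF B] unfolding \<sigma>_def by simp
      then have f2C: "f2 \<in> C" using f1C j p unfolding memC f2_def by auto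
      have "V f2 = b e e" unfolding f2_def Vb using sig by (simp add: b_scl b_scr)
      then have "\<bar>V f2\<bar> = S" using bee eps(3)[of "b e e"] S0 by simp
      then have "\<Phi> f2 \<le> \<Phi> f1" using f1 inK f2C by blast
      moreover have "\<Phi> f2 = bip B R R + 4 * (\<sigma> * bip B R wp) / nn + 4"
      proof -
        have "\<Phi> f2 = bip B (2 *\<^sub>R (\<sigma> *\<^sub>R e) + R) (2 *\<^sub>R (\<sigma> *\<^sub>R e) + R)"
          unfolding \<Phi>_def f2_def sumf2 ..
        also have "\<dots> = 4 * (\<sigma> * \<sigma>) * bip B e e + 4 * \<sigma> * bip B R e + bip B R R"
          by (simp add: bs bip_sym[OF B, of e R] algebra_simps)
        also have "bip B R e = bip B R wp / nn" unfolding e_def using nn0 by (simp add: bs)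
        finally show ?thesis using sig ee by (simp add: algebra_simps)
      qed
      moreover have "\<Phi> f1 = bip B R R + 2 * bip B R wp + nn^2"
        unfolding Phi1 nn2 by (simp add: bs bip_sym[OF B, of wp R] algebra_simps)
      moreover have "nn < 2"
      proof -
        have "nn^2 < 2^2" using nn2 ipsum wm0 by simp
        then show ?thesis using nn0 power_less_imp_less_base by fastforce
      qed
      moreover have "4 * \<bar>bip B R wp\<bar> / nn \<ge> 2 * \<bar>bip B R wp\<bar>"
      proof -
        have "2 * \<bar>bip B R wp\<bar> * nn \<le> 2 * \<bar>bip B R wp\<bar> * 2"
          using \<open>nn < 2\<close> by (intro mult_left_mono) auto
        then show ?thesis using nn0 by (simp add: field_simps)
      qed
      moreover have "nn^2 < 4" using nn2 ipsum wm0 by simp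
      moreover have "4 * (\<sigma> * bip B R wp) / nn = 4 * \<bar>bip B R wp\<bar> / nn" using sig by simp
      moreover have "\<bar>bip B R wp\<bar> \<ge> bip B R wp" by simp
      ultimately show False by linarith
    next
      case True
      then have x2m: "x2 = - x1" unfolding wp_def by (simp add: eq_neg_iff_add_eq_0 add.commute)
      have "b x1 x2 = - b x1 x1" using x2m b_minr by simp
      then have bx: "\<bar>b x1 x1\<bar> = S" using b12 f1S by simp
      define \<sigma> where "\<sigma> = (if bip B R x1 \<ge> 0 then 1 else - 1 :: real)"
      have sig: "\<sigma> * \<sigma> = 1" "\<sigma> * bip B R x1 = \<bar>bip B R x1\<bar>" unfolding \<sigma>_def by auto
      define f2 where "f2 = f1(0 := \<sigma> *\<^sub>R x1, j := \<sigma> *\<^sub>R x1)"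
      have "Bnorm B x1 = 1" using u1 Bnorm_bip[OF B] by simp
      then have "Bnorm B (\<sigma> *\<^sub>R x1) = 1" using Bnorm_scale[OF B] unfolding \<sigma>_def by simp
      then have f2C: "f2 \<in> C" using f1C j p unfolding memC f2_def by auto
      have "V f2 = b x1 x1" unfolding f2_def Vb using sig by (simp add: b_scl b_scr)
      then have "\<bar>V f2\<bar> = S" using bx by simp
      then have "\<Phi> f2 \<le> \<Phi> f1" using f1 inK f2C by blast
      moreover have "\<Phi> f2 = bip B R R + 4 * (\<sigma> * bip B R x1) + 4"
      proof -
        have "\<Phi> f2 = bip B (2 *\<^sub>R (\<sigma> *\<^sub>R x1) + R) (2 *\<^sub>R (\<sigma> *\<^sub>R x1) + R)"
          unfolding \<Phi>_def f2_def sumf2 ..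
        also have "\<dots> = 4 * (\<sigma> * \<sigma>) * bip B x1 x1 + 4 * \<sigma> * bip B R x1 + bip B R R"
          by (simp add: bs bip_sym[OF B, of x1 R] algebra_simps)
        finally show ?thesis using sig u1 by (simp add: algebra_simps)
      qed
      moreover have "\<Phi> f1 = bip B R R" unfolding Phi1 True by simp
      ultimately show False using sig(2) abs_ge_zero[of "bip B R x1"] by linarith
    qed
  qed
  have rep: "map f1 [0..<p] = replicate p (f1 0)"
  proof (rule nth_equalityI)
    show "length (map f1 [0..<p]) = length (replicate p (f1 0))" by simp
    fix i assume "i < length (map f1 [0..<p])"
    then have "i < p" by simp
    then have "f1 i = f1 0" using allEq by blast
    then show "map f1 [0..<p] ! i = replicate p (f1 0) ! i" using \<open>i < p\<close> by simp
  qed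
  have "Bnorm B (f1 0) = 1" using f1C p unfolding memC by blast
  then have SM: "S \<le> M" using M[of "f1 0"] f1S rep unfolding V_def by simp
  assume lx: "length xs = p" and ux: "\<forall>x\<in>set xs. Bnorm B x = 1"
  define f where "f i = (if i < p then xs ! i else 0)" for i
  have "f \<in> C" unfolding memC f_def using ux lx by auto
  moreover have "map f [0..<p] = xs" using lx by (intro nth_equalityI) (auto simp: f_def)
  ultimately show "\<bar>A xs\<bar> \<le> M" using SC[of f] SM unfolding V_def by simp
qed

lemma deriv_mono_fact:
  assumes "0 < k"
  shows "((\<lambda>t::real. c * t ^ k / fact k) has_real_derivative c * t ^ (k - 1) / fact (k - 1)) (at t)"
proof -
  have "((\<lambda>t::real. c * t ^ k / fact k) has_real_derivative c * (of_nat k * t ^ (k - 1)) / fact k) (at t)"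
    by (auto intro!: derivative_eq_intros)
  moreover have "c * (of_nat k * t ^ (k - 1)) / fact k = c * t ^ (k - 1) / fact (k - 1)"
  proof -
    obtain k' where k: "k = Suc k'" using assms by (cases k) auto
    have "c * (of_nat k * t ^ (k - 1)) / fact k = (of_nat (Suc k') * (c * t ^ k')) / (of_nat (Suc k') * fact k')"
      unfolding k by (simp only: fact_Suc of_nat_mult diff_Suc_1 ac_simps)
    also have "\<dots> = c * t ^ k' / fact k'"
      by (rule nonzero_mult_divide_mult_cancel_left) simp
    finally show ?thesis unfolding k by simp
  qed
  ultimately show ?thesis by simp
qed

lemma taylor_cmp_half:
  fixes dd :: "nat \<Rightarrow> real \<Rightarrow> real"
  assumes n: "0 < n" and sg: "\<sigma> = 1 \<or> \<sigma> = -1"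
    and der: "\<And>m t. m < n \<Longrightarrow> 0 \<le> t \<Longrightarrow> t \<le> 1 \<Longrightarrow> (dd m has_real_derivative dd (Suc m) t) (at t)"
    and rem: "\<And>t. 0 \<le> t \<Longrightarrow> t \<le> 1 \<Longrightarrow> \<bar>dd n t - dd n 0\<bar> \<le> c * t"
  shows "\<sigma> * (\<Sum>m\<le>n. dd m 0 / fact m) \<le> \<sigma> * dd 0 1 + c / fact (Suc n)"
proof -
  define G where "G m t = \<sigma> * dd m t + c * t ^ (Suc n - m) / fact (Suc n - m)" for m t
  have dG: "\<forall>m t. m < n \<and> 0 \<le> t \<and> t \<le> 1 \<longrightarrow> DERIV (G m) t :> G (Suc m) t"
  proof (intro allI impI)
    fix m :: nat and t :: real assume a: "m < n \<and> 0 \<le> t \<and> t \<le> 1"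
    have k: "Suc n - m - 1 = Suc n - Suc m" by simp
    have "DERIV (G m) t :> \<sigma> * dd (Suc m) t + c * t ^ (Suc n - m - 1) / fact (Suc n - m - 1)"
    proof -
      have d1: "DERIV (\<lambda>z. \<sigma> * dd m z) t :> \<sigma> * dd (Suc m) t"
        using DERIV_cmult[OF der[of m t]] a by auto
      have d2: "DERIV (\<lambda>z. c * z ^ (Suc n - m) / fact (Suc n - m)) t :> c * t ^ (Suc n - m - 1) / fact (Suc n - m - 1)"
        using deriv_mono_fact[of "Suc n - m" c t] a by simp
      show ?thesis unfolding G_def using DERIV_add[OF d1 d2] by simp
    qed
    then show "DERIV (G m) t :> G (Suc m) t" unfolding G_def k .
  qed
  obtain t where t: "0 < t" "t < 1"
    and eq: "G 0 1 = (\<Sum>m<n. (G m 0 / fact m) * (1 - 0)^m) + (G n t / fact n) * (1 - 0)^n"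
    using Taylor[OF n refl dG, of 0 1] by auto
  have G0: "G m 0 = \<sigma> * dd m 0" if "m < n" for m unfolding G_def using that by simp
  have Gn: "G n t \<ge> \<sigma> * dd n 0"
  proof -
    have "\<bar>dd n t - dd n 0\<bar> \<le> c * t" using rem t by simp
    then have "\<sigma> * dd n t + c * t \<ge> \<sigma> * dd n 0" using sg by (auto simp: abs_le_iff)
    then show ?thesis unfolding G_def by simp
  qed
  have "G 0 1 = \<sigma> * dd 0 1 + c / fact (Suc n)" unfolding G_def by simp
  moreover have "(\<Sum>m<n. (G m 0 / fact m) * (1 - 0)^m) = \<sigma> * (\<Sum>m<n. dd m 0 / fact m)"
    by (simp add: G0 sum_distrib_left)
  moreover have "G n t / fact n \<ge> \<sigma> * dd n 0 / fact n"
    using Gn by (simp add: divide_right_mono)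
  moreover have "(\<Sum>m\<le>n. dd m 0 / fact m) = (\<Sum>m<n. dd m 0 / fact m) + dd n 0 / fact n"
    by (simp add: lessThan_Suc_atMost[symmetric])
  ultimately show ?thesis using eq by (simp add: distrib_left)
qed

lemma taylor_cmp:
  fixes dd :: "nat \<Rightarrow> real \<Rightarrow> real"
  assumes n: "0 < n"
    and der: "\<And>m t. m < n \<Longrightarrow> 0 \<le> t \<Longrightarrow> t \<le> 1 \<Longrightarrow> (dd m has_real_derivative dd (Suc m) t) (at t)"
    and rem: "\<And>t. 0 \<le> t \<Longrightarrow> t \<le> 1 \<Longrightarrow> \<bar>dd n t - dd n 0\<bar> \<le> c * t"
  shows "\<bar>dd 0 1 - (\<Sum>m\<le>n. dd m 0 / fact m)\<bar> \<le> c / fact (Suc n)"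
  using taylor_cmp_half[OF n _ der rem, of 1] taylor_cmp_half[OF n _ der rem, of "-1"]
  by (simp add: abs_le_iff)

lemma fn_upper:
  fixes B :: "'a::euclidean_space \<Rightarrow> 'a" and A :: "'a list \<Rightarrow> real"
  assumes B: "self_adjoint_pd B" and A: "symf p A" and p: "0 < p" and v: "Bnorm B v \<le> 1"
  shows "\<bar>A (replicate p v)\<bar> \<le> form_norm B p A"
proof -
  define Sph where "Sph = {v. Bnorm B v = 1}"
  have cS: "compact Sph" unfolding Sph_def using Sph_compact[OF B] .
  have neS: "Sph \<noteq> {}" unfolding Sph_def using Sph_ne[OF B] by blast
  have ct: "continuous_on UNIV (\<lambda>v. A (replicate p v))"
    using cont_form[OF A, of UNIV "\<lambda>i v. v"] by (simp add: map_replicate_const continuous_on_id)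
  have cta: "continuous_on Sph (\<lambda>v. \<bar>A (replicate p v)\<bar>)"
    by (intro continuous_intros continuous_on_subset[OF ct]) auto
  obtain vs where vs: "vs \<in> Sph" "\<forall>w\<in>Sph. \<bar>A (replicate p w)\<bar> \<le> \<bar>A (replicate p vs)\<bar>"
    using continuous_attains_sup[OF cS neS cta] by blast
  define K where "K = \<bar>A (replicate p vs)\<bar>"
  have bnd: "\<bar>A (replicate p w)\<bar> \<le> K" if "Bnorm B w \<le> 1" for w
  proof (cases "w = 0")
    case True
    then show ?thesis using symf_zero[OF A, of "replicate p w"] p unfolding K_def by simp
  next
    case False
    define n where "n = Bnorm B w"
    define wh where "wh = (1 / n) *\<^sub>R w"
    have whu: "Bnorm B wh = 1" and wwh: "w = n *\<^sub>R wh"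
      using normalize_B[OF B False] unfolding wh_def n_def by auto
    have n0: "0 \<le> n" "n \<le> 1" unfolding n_def using Bnorm_nonneg[OF B] that by auto
    have "A (replicate p w) = A (map ((*\<^sub>R) n) (replicate p wh))" using wwh by simp
    also have "\<dots> = n ^ p * A (replicate p wh)" using symf_scale_all[OF A, of "replicate p wh" n] by (simp only: length_replicate)
    finally have "\<bar>A (replicate p w)\<bar> = n ^ p * \<bar>A (replicate p wh)\<bar>" using n0 by (simp add: abs_mult)
    also have "\<dots> \<le> 1 * K" using vs whu unfolding K_def Sph_def
      by (intro mult_mono) (auto simp: n0 power_le_one)
    finally show ?thesis by simp
  qed
  have "bdd_above ((\<lambda>v. \<bar>A (replicate p v)\<bar>) ` {v. Bnorm B v \<le> 1})"
    by (rule bdd_aboveI2[where M=K]) (use bnd in auto)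
  then show ?thesis unfolding form_norm_def using cSUP_upper[of v "{v. Bnorm B v \<le> 1}" "\<lambda>v. \<bar>A (replicate p v)\<bar>"] v by simp
qed

lemma banach_mixed:
  fixes B :: "'a::euclidean_space \<Rightarrow> 'a" and A :: "'a list \<Rightarrow> real"
  assumes B: "self_adjoint_pd B" and A: "symf p A" and p: "2 \<le> p"
  shows "\<bar>A (u # replicate (p - 1) r)\<bar> \<le> form_norm B p A * Bnorm B u * Bnorm B r ^ (p - 1)"
proof -
  have p0: "0 < p" using p by simp
  define M where "M = form_norm B p A"
  have Mb: "\<bar>A (replicate p v)\<bar> \<le> M" if "Bnorm B v = 1" for v
    unfolding M_def using fn_upper[OF B A p0] that by simp
  obtain v0 where "Bnorm B v0 = 1" using Sph_ne[OF B] by blast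
  then have M0: "M \<ge> 0" using Mb[of v0] by linarith
  have ln: "length (u # replicate (p - 1) r) = p" using p by simp
  show ?thesis
  proof (cases "u = 0 \<or> r = 0")
    case True
    then have "0 \<in> set (u # replicate (p - 1) r)" using p by auto
    then have "A (u # replicate (p - 1) r) = 0" using symf_zero[OF A ln] by simp
    then show ?thesis using M0 Bnorm_nonneg[OF B] unfolding M_def by simp
  next
    case False
    then have u0: "u \<noteq> 0" and r0: "r \<noteq> 0" by auto
    define nu where "nu = Bnorm B u"
    define nr where "nr = Bnorm B r"
    define uh where "uh = (1 / nu) *\<^sub>R u"
    define rh where "rh = (1 / nr) *\<^sub>R r"
    have uhu: "Bnorm B uh = 1" and uuh: "u = nu *\<^sub>R uh"
      using normalize_B[OF B u0] unfolding uh_def nu_def by auto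
    have rhu: "Bnorm B rh = 1" and rrh: "r = nr *\<^sub>R rh"
      using normalize_B[OF B r0] unfolding rh_def nr_def by auto
    have nn: "nu \<ge> 0" "nr \<ge> 0" unfolding nu_def nr_def using Bnorm_nonneg[OF B] by auto
    have "A (u # replicate (p - 1) r) = nu * A (uh # map ((*\<^sub>R) nr) (replicate (p - 1) rh))"
      using linear_cmul[OF symf_lin[OF A p0, of "map ((*\<^sub>R) nr) (replicate (p - 1) rh)"], of nu uh]
        uuh rrh by simp
    also have "A (uh # map ((*\<^sub>R) nr) (replicate (p - 1) rh)) = A (map ((*\<^sub>R) nr) (replicate (p - 1) rh) @ [uh])"
      using symf_perm[OF A, of "uh # map ((*\<^sub>R) nr) (replicate (p - 1) rh)"] p by simp
    also have "\<dots> = nr ^ (p - 1) * A (replicate (p - 1) rh @ [uh])"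
      using symf_scale_aux[OF A, of "replicate (p - 1) rh" "[uh]" nr] p by simp
    also have "A (replicate (p - 1) rh @ [uh]) = A (uh # replicate (p - 1) rh)"
      using symf_perm[OF A, of "replicate (p - 1) rh @ [uh]"] p by simp
    finally have eq: "A (u # replicate (p - 1) r) = nu * nr ^ (p - 1) * A (uh # replicate (p - 1) rh)"
      by simp
    have "\<bar>A (uh # replicate (p - 1) rh)\<bar> \<le> M"
      using banach[OF B A p0 Mb] uhu rhu p by auto
    then have "\<bar>A (u # replicate (p - 1) r)\<bar> \<le> nu * nr ^ (p - 1) * M"
      unfolding eq using nn by (simp add: abs_mult mult_left_mono)
    then show ?thesis unfolding M_def nu_def nr_def by (simp add: ac_simps)
  qed
qed

lemma linear_div_const:
  fixes \<phi> :: "'a::real_vector \<Rightarrow> real"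
  assumes "linear \<phi>"
  shows "linear (\<lambda>u. \<phi> u / c)"
  by (rule linearI) (simp_all add: linear_add[OF assms] linear_cmul[OF assms] add_divide_distrib)

lemma linear_diff_fun:
  fixes \<phi> \<psi> :: "'a::real_vector \<Rightarrow> real"
  assumes "linear \<phi>" "linear \<psi>"
  shows "linear (\<lambda>u. \<phi> u - \<psi> u)"
  by (rule linearI) (simp_all add: linear_add[OF assms(1)] linear_cmul[OF assms(1)]
      linear_add[OF assms(2)] linear_cmul[OF assms(2)] algebra_simps)

lemma taylor_grad_inner:
  fixes D :: "nat \<Rightarrow> 'a::euclidean_space \<Rightarrow> 'a list \<Rightarrow> real"
  assumes fD: "derivs_upto p f D U" and xU: "x \<in> U"
  shows "inner (taylor_grad p D x T) u = (\<Sum>k=1..p. D k x (u # replicate (k - 1) (T - x)) / fact (k - 1))"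
proof -
  have "linear (\<lambda>u. \<Sum>k=1..p. D k x (u # replicate (k - 1) (T - x)) / fact (k - 1))"
  proof (rule linear_compose_sum, intro ballI)
    fix k assume k: "k \<in> {1..p}"
    then have "linear (\<lambda>u. D (Suc (k - 1)) x (u # replicate (k - 1) (T - x)))"
      using D_lin[OF fD _ xU, of "k - 1" "replicate (k - 1) (T - x)"] by auto
    then show "linear (\<lambda>u. D k x (u # replicate (k - 1) (T - x)) / fact (k - 1))"
      using k by (intro linear_div_const) auto
  qed
  then show ?thesis unfolding taylor_grad_def by (rule dual_vec_inner)
qed

lemma grad_bound:
  fixes B :: "'a::euclidean_space \<Rightarrow> 'a" and D :: "nat \<Rightarrow> 'a \<Rightarrow> 'a list \<Rightarrow> real"
  assumes B: "self_adjoint_pd B" and fD: "derivs_upto p f D U" and U: "open U" and p: "2 \<le> p"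
    and E: "E \<subseteq> U" and seg: "\<And>\<tau>. 0 \<le> \<tau> \<Longrightarrow> \<tau> \<le> 1 \<Longrightarrow> x + \<tau> *\<^sub>R (T - x) \<in> E"
    and Lip: "\<forall>y\<in>E. \<forall>z\<in>E. form_norm B p (\<lambda>hs. D p y hs - D p z hs) \<le> L * Bnorm B (y - z)"
  shows "\<bar>inner (dual_vec (\<lambda>u. D 1 T [u]) - taylor_grad p D x T) u\<bar>
           \<le> L / fact p * Bnorm B (T - x) ^ p * Bnorm B u"
proof -
  define r where "r = T - x"
  have xE: "x \<in> E" using seg[of 0] by simp
  have TE: "T \<in> E" using seg[of 1] by simp
  have xU: "x \<in> U" and TU: "T \<in> U" using xE TE E by auto
  define n where "n = p - 1"
  have n0: "0 < n" and pn: "p = Suc n" unfolding n_def using p by auto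
  define dd where "dd m \<tau> = D (Suc m) (x + \<tau> *\<^sub>R r) (u # replicate m r)" for m \<tau>
  have der: "(dd m has_real_derivative dd (Suc m) \<tau>) (at \<tau>)" if m: "m < n" and t: "0 \<le> \<tau>" "\<tau> \<le> 1" for m \<tau>
  proof -
    define z where "z = x + \<tau> *\<^sub>R r"
    have zU: "z \<in> U" using seg[OF t] E unfolding z_def r_def by auto
    have "((\<lambda>z. D (Suc m) z (u # replicate m r)) has_derivative
        (\<lambda>v. D (Suc (Suc m)) z (v # u # replicate m r))) (at z)"
      using D_deriv[OF fD _ zU, of "Suc m" "u # replicate m r"] m pn by simp
    from line_deriv[OF this[unfolded z_def]]
    have "(dd m has_real_derivative D (Suc (Suc m)) z (r # u # replicate m r)) (at \<tau>)"
      unfolding dd_def z_def by simp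
    moreover have "D (Suc (Suc m)) z (r # u # replicate m r) = D (Suc (Suc m)) z (u # replicate (Suc m) r)"
      using D_sym[OF fD U, of "Suc (Suc m)" z "r # u # replicate m r" "u # replicate (Suc m) r"] m pn zU
      by (simp add: add_mset_commute)
    ultimately show ?thesis unfolding dd_def z_def by simp
  qed
  define c where "c = L * Bnorm B r ^ p * Bnorm B u"
  have rem: "\<bar>dd n t - dd n 0\<bar> \<le> c * t" if t: "0 \<le> t" "t \<le> 1" for t
  proof -
    define y where "y = x + t *\<^sub>R r"
    have yE: "y \<in> E" using seg[OF t] unfolding y_def r_def by simp
    have yU: "y \<in> U" using yE E by auto
    define A where "A hs = D p y hs - D p x hs" for hs
    have symA: "symf p A" unfolding symf_def
    proof (intro conjI allI impI)
      fix xs ys :: "'a list" assume "length xs = p" "mset xs = mset ys"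
      then show "A xs = A ys" unfolding A_def using D_sym[OF fD U _ yU] D_sym[OF fD U _ xU] by simp
    next
      fix t' :: "'a list" assume "0 < p" "length t' = p - 1"
      then have "linear (\<lambda>v. D (Suc n) y (v # t'))" "linear (\<lambda>v. D (Suc n) x (v # t'))"
        using D_lin[OF fD _ yU, of n t'] D_lin[OF fD _ xU, of n t'] pn by auto
      then show "linear (\<lambda>v. A (v # t'))" unfolding A_def pn by (rule linear_diff_fun)
    qed
    have "dd n t - dd n 0 = A (u # replicate (p - 1) r)"
      unfolding dd_def A_def y_def pn by simp
    then have "\<bar>dd n t - dd n 0\<bar> \<le> form_norm B p A * Bnorm B u * Bnorm B r ^ (p - 1)"
      using banach_mixed[OF B symA p] by simp
    also have "form_norm B p A \<le> L * (t * Bnorm B r)"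
    proof -
      have "form_norm B p A \<le> L * Bnorm B (y - x)" using Lip yE xE unfolding A_def by blast
      moreover have "y - x = t *\<^sub>R r" unfolding y_def by simp
      ultimately show ?thesis using Bnorm_scale[OF B, of t r] t by simp
    qed
    then have "form_norm B p A * Bnorm B u * Bnorm B r ^ (p - 1) \<le> L * (t * Bnorm B r) * Bnorm B u * Bnorm B r ^ (p - 1)"
      using Bnorm_nonneg[OF B, of u] Bnorm_nonneg[OF B, of r]
      by (intro mult_right_mono) auto
    also have "\<dots> = c * t" unfolding c_def using pn by (simp add: algebra_simps)
    finally show ?thesis .
  qed
  have tay: "\<bar>dd 0 1 - (\<Sum>m\<le>n. dd m 0 / fact m)\<bar> \<le> c / fact (Suc n)"
    by (rule taylor_cmp[OF n0 der rem])
  have "dd 0 1 = D 1 T [u]" unfolding dd_def r_def by simp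
  moreover have "(\<Sum>m\<le>n. dd m 0 / fact m) = (\<Sum>k=1..p. D k x (u # replicate (k - 1) (T - x)) / fact (k - 1))"
  proof -
    have "(\<Sum>k=1..p. D k x (u # replicate (k - 1) (T - x)) / fact (k - 1))
        = (\<Sum>m=0..n. D (Suc m) x (u # replicate m (T - x)) / fact m)"
      unfolding pn using sum.shift_bounds_cl_Suc_ivl[of "\<lambda>k. D k x (u # replicate (k - 1) (T - x)) / fact (k - 1)" 0 n]
      by simp
    then show ?thesis unfolding dd_def r_def by (simp add: atMost_atLeast0)
  qed
  moreover have "inner (dual_vec (\<lambda>u. D 1 T [u])) u = D 1 T [u]"
    using dual_vec_inner[OF D_lin[OF fD _ TU, of 0 "[]"]] p by simp
  ultimately have "inner (dual_vec (\<lambda>u. D 1 T [u]) - taylor_grad p D x T) u = dd 0 1 - (\<Sum>m\<le>n. dd m 0 / fact m)"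
    using taylor_grad_inner[OF fD xU, of T u] by (simp add: inner_diff_left)
  then show ?thesis using tay unfolding c_def r_def pn by simp
qed

lemma real_final:
  fixes P L \<beta> a \<rho> X fp :: real
  assumes P: "P \<ge> 2" and L: "L > 0" and \<beta>: "\<beta> > 1" and a: "a > 0" and \<rho>: "\<rho> > 0" and fp: "fp > 0"
    and hyp: "X * (2 * \<beta> * L * \<rho> powr (P - 1) / fp) \<ge> a\<^sup>2 + (\<beta>\<^sup>2 - 1) * L\<^sup>2 * \<rho> powr (2 * P) / fp\<^sup>2"
  shows "X \<ge> (fp / ((P + 1) * L)) powr (1 / P) * a powr ((P + 1) / P)
             * ((\<beta>\<^sup>2 - 1) powr ((P - 1) / (2 * P)) / \<beta>) * (P / (P\<^sup>2 - 1) powr ((P - 1) / (2 * P)))"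
proof -
  define \<theta> where "\<theta> = (P + 1) / (2 * P)"
  define q where "q = (P - 1) / (2 * P)"
  have th0: "\<theta> > 0" "q > 0" "\<theta> + q = 1" unfolding \<theta>_def q_def using P by (auto simp: field_simps)
  have b2: "\<beta>\<^sup>2 - 1 > 0" using \<beta> by (smt (verit) one_less_power pos2)
  define Y0 where "Y0 = (\<beta>\<^sup>2 - 1) * L\<^sup>2 * \<rho> powr (2 * P) / fp\<^sup>2"
  have Y0: "Y0 > 0" unfolding Y0_def using b2 L \<rho> fp by simp
  have a2: "a\<^sup>2 > 0" using a by simp
  define YL where "YL = (a\<^sup>2 / \<theta>) powr \<theta> * (Y0 / q) powr q"
  have young: "YL \<le> a\<^sup>2 + Y0"
    using Youngs_inequality_0[of \<theta> q "a\<^sup>2 / \<theta>" "Y0 / q"] th0 a2 Y0 unfolding YL_def by simp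
  define Den where "Den = 2 * \<beta> * L * \<rho> powr (P - 1) / fp"
  have Den: "Den > 0" unfolding Den_def using \<beta> L \<rho> fp by simp
  have "a\<^sup>2 + Y0 \<le> X * Den" using hyp unfolding Den_def Y0_def by simp
  then have XD: "X \<ge> (a\<^sup>2 + Y0) / Den" by (simp add: pos_divide_le_eq[OF Den])
  define RHS where "RHS = (fp / ((P + 1) * L)) powr (1 / P) * a powr ((P + 1) / P)
             * ((\<beta>\<^sup>2 - 1) powr ((P - 1) / (2 * P)) / \<beta>) * (P / (P\<^sup>2 - 1) powr ((P - 1) / (2 * P)))"
  have P1: "P\<^sup>2 - 1 > 0" "P - 1 > 0" "P + 1 > 0" "P > 0" using P by (auto simp: power2_eq_square) (smt (verit) mult_le_cancel_right1)
  have YLp: "YL > 0" unfolding YL_def using a2 Y0 th0 by simp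
  have f1: "(fp / ((P + 1) * L)) powr (1 / P) > 0" using fp P1 L by simp
  have f2: "a powr ((P + 1) / P) > 0" using a by simp
  have f3: "(\<beta>\<^sup>2 - 1) powr ((P - 1) / (2 * P)) > 0" using b2 by simp
  have f4: "(P\<^sup>2 - 1) powr ((P - 1) / (2 * P)) > 0" using P1(1) by (simp del: diff_gt_0_iff_gt)
  have Pn1: "P\<^sup>2 \<noteq> 1" using P1(1) by linarith
  have RHSp: "RHS > 0" unfolding RHS_def using f1 f2 f3 f4 \<beta> P1 Pn1
    by (intro mult_pos_pos divide_pos_pos) auto
  have "ln (YL / Den) = ln RHS"
  proof -
    have l1: "ln (YL / Den) = \<theta> * (2 * ln a - ln \<theta>) + q * (ln Y0 - ln q) - ln Den"
      unfolding YL_def using a2 Y0 th0 Den a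
      by (simp add: ln_div ln_mult ln_powr power2_eq_square)
    have l2: "ln Y0 = ln (\<beta>\<^sup>2 - 1) + 2 * ln L + 2 * P * ln \<rho> - 2 * ln fp"
      unfolding Y0_def using b2 L \<rho> fp by (simp add: ln_div ln_mult ln_powr power2_eq_square)
    have l3: "ln Den = ln 2 + ln \<beta> + ln L + (P - 1) * ln \<rho> - ln fp"
      unfolding Den_def using \<beta> L \<rho> fp by (simp add: ln_div ln_mult ln_powr)
    have l4: "ln \<theta> = ln (P + 1) - ln 2 - ln P" "ln q = ln (P - 1) - ln 2 - ln P"
      unfolding \<theta>_def q_def using P1 by (simp_all add: ln_div ln_mult)
    have l5: "ln RHS = (1 / P) * (ln fp - ln (P + 1) - ln L) + ((P + 1) / P) * ln a
        + ((P - 1) / (2 * P)) * ln (\<beta>\<^sup>2 - 1) - ln \<beta> + ln P - ((P - 1) / (2 * P)) * (ln (P - 1) + ln (P + 1))"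
    proof -
      have "P\<^sup>2 - 1 = (P - 1) * (P + 1)" by (simp add: power2_eq_square algebra_simps)
      then have "ln (P\<^sup>2 - 1) = ln (P - 1) + ln (P + 1)" using P1 by (simp add: ln_mult)
      moreover have bn: "(\<beta>\<^sup>2 = 1) = False" using b2 by simp
      ultimately show ?thesis unfolding RHS_def using fp P1 L a b2 \<beta> Pn1
        by (simp add: ln_div ln_mult ln_powr bn)
    qed
    show ?thesis unfolding l1 l2 l3 l4 l5 unfolding \<theta>_def q_def using P1
      by (simp add: field_simps)
  qed
  then have "YL / Den = RHS" using YLp Den RHSp by (simp add: ln_inj_iff)
  moreover have "YL / Den \<le> (a\<^sup>2 + Y0) / Den" using young Den by (simp add: divide_right_mono)
  ultimately show ?thesis using XD unfolding RHS_def by linarith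
qed

theorem lemma1:
  fixes B :: "'a::euclidean_space \<Rightarrow> 'a"
    and f :: "'a \<Rightarrow> real" and h :: "'a \<Rightarrow> ereal"
    and D :: "nat \<Rightarrow> 'a \<Rightarrow> 'a list \<Rightarrow> real"
    and U :: "'a set" and p :: nat and L \<beta> H :: real and x T :: 'a
  assumes B: "self_adjoint_pd B"
    and h: "proper_fun h" "closed_fun h" "convex_fun h"
    and U: "open U" "convex U" "edom h \<subseteq> U"
    and fconv: "convex_on U f"
    and fD: "derivs_upto p f D U"
    and L: "0 < L"
    and Lip: "\<forall>y\<in>edom h. \<forall>z\<in>edom h. form_norm B p (\<lambda>hs. D p y hs - D p z hs) \<le> L * Bnorm B (y - z)"
    and p: "2 \<le> p"
    and x: "x \<in> edom h"
    and \<beta>: "1 < \<beta>" and H: "H = \<beta> * L"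
    and T: "\<forall>y. ereal (taylor p f D x T + H / fact (p + 1) * Bnorm B (T - x) ^ (p + 1)) + h T
               \<le> ereal (taylor p f D x y + H / fact (p + 1) * Bnorm B (y - x) ^ (p + 1)) + h y"
  defines "F' \<equiv> dual_vec (\<lambda>u. D 1 T [u]) - taylor_grad p D x T
                  - (H / fact p * Bnorm B (T - x) ^ (p - 1)) *\<^sub>R B (T - x)"
  shows "inner F' (x - T) \<ge>
           (fact p / ((p + 1) * L)) powr (1 / p) * Bdnorm B F' powr ((p + 1) / p)
           * ((\<beta>\<^sup>2 - 1) powr ((p - 1) / (2 * p)) / \<beta>)
           * (p / ((real p)\<^sup>2 - 1) powr ((p - 1) / (2 * p)))
         \<and> (\<beta> = p \<longrightarrow> inner F' (x - T) \<ge>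
           (fact p / ((p + 1) * L)) powr (1 / p) * Bdnorm B F' powr ((p + 1) / p))"
proof -
  note bs = bip_simps[OF B]
  have hx: "h x < \<infinity>" using x unfolding edom_def by simp
  have hfin: "h y > - \<infinity>" for y using h(1) unfolding proper_fun_def by blast
  have TE: "T \<in> edom h"
  proof -
    have le: "ereal (taylor p f D x T + H / fact (p + 1) * Bnorm B (T - x) ^ (p + 1)) + h T
               \<le> ereal (taylor p f D x x + H / fact (p + 1) * Bnorm B (x - x) ^ (p + 1)) + h x"
      using T by blast
    have "ereal (taylor p f D x x + H / fact (p + 1) * Bnorm B (x - x) ^ (p + 1)) + h x < \<infinity>"
      using hx hfin[of x] by (cases "h x") auto
    then have "h T \<noteq> \<infinity>" using le by auto
    then show ?thesis unfolding edom_def by (simp add: top.not_eq_extremum)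
  qed
  have cvx: "(1 - t) *\<^sub>R y + t *\<^sub>R z \<in> edom h" if "y \<in> edom h" "z \<in> edom h" "0 \<le> t" "t \<le> 1" for y z t
  proof -
    have hy: "h y < \<infinity>" "h z < \<infinity>" using that(1,2) unfolding edom_def by auto
    obtain a1 where a1: "h y = ereal a1" using hy(1) hfin[of y] by (cases "h y") auto
    obtain a2 where a2: "h z = ereal a2" using hy(2) hfin[of z] by (cases "h z") auto
    have "h ((1 - t) *\<^sub>R y + t *\<^sub>R z) \<le> ereal (1 - t) * h y + ereal t * h z"
      using h(3) that unfolding convex_fun_def by blast
    also have "\<dots> = ereal ((1 - t) * a1 + t * a2)" using a1 a2 by simp
    finally show ?thesis unfolding edom_def by (auto simp: top.not_eq_extremum)
  qed
  have seg: "x + \<tau> *\<^sub>R (T - x) \<in> edom h" if "0 \<le> \<tau>" "\<tau> \<le> 1" for \<tau>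
  proof -
    have "x + \<tau> *\<^sub>R (T - x) = (1 - \<tau>) *\<^sub>R x + \<tau> *\<^sub>R T" by (simp add: algebra_simps)
    then show ?thesis using cvx[OF x TE that] by simp
  qed
  define g where "g = dual_vec (\<lambda>u. D 1 T [u]) - taylor_grad p D x T"
  define r where "r = T - x"
  define \<rho> where "\<rho> = Bnorm B r"
  define K where "K = L / fact p * \<rho> ^ p"
  define c where "c = H / fact p * \<rho> ^ (p - 1)"
  have gb: "\<bar>inner g u\<bar> \<le> K * Bnorm B u" for u
    using grad_bound[OF B fD U(1) p U(3) seg Lip] unfolding g_def K_def \<rho>_def r_def by simp
  have F'eq: "F' = g - c *\<^sub>R B r" unfolding F'_def g_def c_def \<rho>_def r_def ..
  have injB: "inj B"
  proof (rule injI)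
    fix y z assume "B y = B z"
    then have "B (y - z) = 0" using linear_diff[OF B_lin[OF B]] by simp
    then have "bip B (y - z) (y - z) = 0" unfolding bip_def by simp
    then show "y = z" using bip_eq0[OF B] by simp
  qed
  have surjB: "surj B" using linear_inj_imp_surj[OF B_lin[OF B] injB] .
  define w where "w = inv B F'"
  have Bw: "B w = F'" unfolding w_def using surjB by (simp add: surj_f_inv_f)
  define a where "a = Bnorm B w"
  have aD: "Bdnorm B F' = a" unfolding a_def Bdnorm_def Bnorm_def w_def[symmetric] Bw ..
  define z where "z = w + c *\<^sub>R r"
  have Bz: "B z = g" unfolding z_def using F'eq Bw linear_add[OF B_lin[OF B]] linear_cmul[OF B_lin[OF B]]
    by simp
  have K0: "K \<ge> 0" unfolding K_def \<rho>_def using L Bnorm_nonneg[OF B] by simp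
  have zK: "Bnorm B z \<le> K"
  proof -
    have "bip B z z = inner g z" unfolding bip_def Bz ..
    then have "(Bnorm B z)^2 \<le> K * Bnorm B z" using gb[of z] Bnorm_sq[OF B, of z] by simp
    then have n2: "Bnorm B z * Bnorm B z \<le> K * Bnorm B z" by (simp add: power2_eq_square)
    show ?thesis
    proof (cases "Bnorm B z = 0")
      case True then show ?thesis using K0 by simp
    next
      case False
      then have "Bnorm B z > 0" using Bnorm_nonneg[OF B, of z] by linarith
      then show ?thesis using n2 mult_le_cancel_right_pos by blast
    qed
  qed
  have LHS: "inner F' (x - T) = - bip B w r" unfolding bip_def Bw[symmetric] r_def
    by (simp add: inner_minus_right[symmetric])
  have expand: "bip B z z = a^2 + 2 * c * bip B w r + c^2 * \<rho>^2"
    unfolding z_def a_def \<rho>_def using Bnorm_sq[OF B, of w] Bnorm_sq[OF B, of r]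
    by (simp add: bs bip_sym[OF B, of r w] power2_eq_square algebra_simps)
  have main: "- bip B w r * (2 * c) \<ge> a^2 + c^2 * \<rho>^2 - K^2"
  proof -
    have "bip B z z \<le> K^2" using zK Bnorm_sq[OF B, of z] Bnorm_nonneg[OF B, of z] K0
      by (metis power_mono)
    then show ?thesis using expand by (simp add: algebra_simps)
  qed
  have fp: "fact p > (0::real)" by simp
  have a0: "a \<ge> 0" unfolding a_def using Bnorm_nonneg[OF B] by simp
  have r0: "\<rho> \<ge> 0" unfolding \<rho>_def using Bnorm_nonneg[OF B] by simp
  have b2: "\<beta>\<^sup>2 - 1 > 0" using \<beta> by (smt (verit) one_less_power pos2)
  have cK: "c^2 * \<rho>^2 - K^2 = (\<beta>\<^sup>2 - 1) * L\<^sup>2 * \<rho> ^ (2 * p) / (fact p)\<^sup>2"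
  proof -
    have "\<rho> ^ (p - 1) * \<rho> = \<rho> ^ p" using p by (metis One_nat_def Suc_diff_1 less_le_trans pos2 power_Suc2 zero_less_one)
    then have "(\<rho> ^ (p - 1))^2 * \<rho>^2 = \<rho> ^ (2 * p)"
      by (metis power_mult_distrib power_mult mult.commute)
    moreover have "(\<rho> ^ p)^2 = \<rho> ^ (2 * p)" by (simp add: power_mult[symmetric] mult.commute)
    ultimately show ?thesis unfolding c_def K_def H
      by (simp add: power_mult_distrib power_divide field_simps)
  qed
  have c2: "2 * c = 2 * \<beta> * L * \<rho> ^ (p - 1) / fact p" unfolding c_def H by simp
  define E where "E = ((\<beta>\<^sup>2 - 1) powr ((p - 1) / (2 * p)) / \<beta>) * (p / ((real p)\<^sup>2 - 1) powr ((p - 1) / (2 * p)))"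
  have first: "- bip B w r \<ge> (fact p / ((p + 1) * L)) powr (1 / p) * a powr ((p + 1) / p) * E"
  proof (cases "\<rho> = 0")
    case True
    then have "r = 0" unfolding \<rho>_def using Bnorm_eq0[OF B] by simp
    moreover have "c = 0" "K = 0" unfolding c_def K_def using True p by auto
    ultimately have "a * a \<le> 0" using main by (simp add: power2_eq_square)
    then have "a = 0" using a0 by (metis mult_eq_0_iff antisym zero_le_square)
    then show ?thesis using \<open>r = 0\<close> p bip_zero_right[OF B] by simp
  next
    case False
    then have rp: "\<rho> > 0" using r0 by linarith
    have cp: "c > 0" unfolding c_def H using rp \<beta> L by simp
    show ?thesis
    proof (cases "a = 0")
      case True
      have "(\<beta>\<^sup>2 - 1) * L\<^sup>2 * \<rho> ^ (2 * p) / (fact p)\<^sup>2 \<ge> 0" using b2 by simp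
      moreover have "a^2 = 0" using True by simp
      ultimately have "- bip B w r * (2 * c) \<ge> 0" using main cK by linarith
      then have "- bip B w r \<ge> 0" using cp by (simp add: zero_le_mult_iff mult_le_0_iff)
      then show ?thesis using True p by simp
    next
      case False
      then have ap: "a > 0" using a0 by linarith
      have pw1: "\<rho> powr (real p - 1) = \<rho> ^ (p - 1)" using rp p powr_realpow[OF rp, of "p - 1"] by (simp add: of_nat_diff)
      have pw2: "\<rho> powr (2 * real p) = \<rho> ^ (2 * p)" using powr_realpow[OF rp, of "2 * p"] by simp
      have hyp: "- bip B w r * (2 * \<beta> * L * \<rho> powr (real p - 1) / fact p)
          \<ge> a\<^sup>2 + (\<beta>\<^sup>2 - 1) * L\<^sup>2 * \<rho> powr (2 * real p) / (fact p)\<^sup>2"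
        using main unfolding pw1 pw2 c2[symmetric] cK[symmetric] by simp
      have P2: "real p \<ge> 2" using p by simp
      have pm: "real (p - Suc 0) = real p - 1" using p by (simp add: of_nat_diff)
      from real_final[OF P2 L \<beta> ap rp fp hyp]
      show ?thesis unfolding E_def using pm by (simp add: mult.assoc add.commute)
    qed
  qed
  have second: "\<beta> = p \<Longrightarrow> E = 1"
  proof -
    assume bp: "\<beta> = p"
    have "(real p)\<^sup>2 - 1 > 0" using b2 bp by simp
    then have "((real p)\<^sup>2 - 1) powr ((p - 1) / (2 * p)) > 0" by simp
    then show "E = 1" unfolding E_def bp using p by simp
  qed
  have eqE: "(fact p / ((p + 1) * L)) powr (1 / p) * Bdnorm B F' powr ((p + 1) / p)
           * ((\<beta>\<^sup>2 - 1) powr ((p - 1) / (2 * p)) / \<beta>)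
           * (p / ((real p)\<^sup>2 - 1) powr ((p - 1) / (2 * p)))
       = (fact p / ((p + 1) * L)) powr (1 / p) * a powr ((p + 1) / p) * E"
    unfolding aD E_def by (simp only: mult.assoc)
  show ?thesis
  proof (intro conjI impI)
    show "inner F' (x - T) \<ge> (fact p / ((p + 1) * L)) powr (1 / p) * Bdnorm B F' powr ((p + 1) / p)
           * ((\<beta>\<^sup>2 - 1) powr ((p - 1) / (2 * p)) / \<beta>)
           * (p / ((real p)\<^sup>2 - 1) powr ((p - 1) / (2 * p)))"
      unfolding eqE LHS by (rule first)
  next
    assume "\<beta> = p"
    then have "E = 1" by (rule second)
    then show "inner F' (x - T) \<ge> (fact p / ((p + 1) * L)) powr (1 / p) * Bdnorm B F' powr ((p + 1) / p)"
      using first unfolding LHS aD by simp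
  qed
qed


end
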